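(* Let $0<\varepsilon_0\le1$. For an expansion with coefficients $a_l$, $h_A\le l\le k_A$, set $a_l=0$ for $l\notin[h_A,k_A]$ (similarly for other letters). The following hold. (i) If $A$ is an $(h_A,k_A,\delta_A,G_A,\varepsilon_A)$-expansion with coefficients $a_l$ and $c\in\mathbb{R}$, then $C=cA$ satisfies $C(\varepsilon)=\sum_{l=h_A}^{k_A}ca_l\varepsilon^l+o_C(\varepsilon)$ with $|o_C(\varepsilon)|\le |c|G_A\varepsilon^{k_A+\delta_A}$ for $0<\varepsilon\le\varepsilon_A$ (i.e. $h_C=h_A,k_C=k_A$, $\delta_C=\delta_A$, $G_C=|c|G_A$, $\varepsilon_C=\varepsilon_A$). (ii) If $A$ is an $(h_A,k_A,\delta_A,G_A,\varepsilon_A)$-expansion with coefficients $a_l$ and $B$ an $(h_B,k_B,\delta_B,G_B,\varepsilon_B)$-expansion with coefficients $b_l$, then $C=A+B$ is an $(h_C,k_C,\delta_C,G_C,\varepsilon_C)$-expansion with $h_C=h_A\wedge h_B$, $k_C=k_A\wedge k_B$, coefficients $c_r=a_r+b_r$, $\delta_C=\delta_A\mathrm{I}(k_A<k_B)+(\delta_A\wedge\delta_B)\mathrm{I}(k_A=k_B)+\delta_B\mathrm{I}(k_B<k_A)\ \ (\ge\delta_A\wedge\delta_B)$, $\varepsilon_C=\varepsilon_A\wedge\varepsilon_B$, and $G_C=G_A\varepsilon_C^{k_A+\delta_A-k_C-\delta_C}+\sum_{k_C<i\le k_A}|a_i|\varepsilon_C^{i-k_C-\delta_C}+G_B\varepsilon_C^{k_B+\delta_B-k_C-\delta_C}+\sum_{k_C<j\le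 k_B}|b_j|\varepsilon_C^{j-k_C-\delta_C}$. (iii) Under the hypotheses of (ii), $C=A\cdot B$ is an $(h_C,k_C,\delta_C,G_C,\varepsilon_C)$-expansion with $h_C=h_A+h_B$, $k_C=(k_A+h_B)\wedge(k_B+h_A)$, coefficients $c_r=\sum_{i+j=r,\,h_A\le i\le k_A,\,h_B\le j\le k_B}a_ib_j$, $\delta_C=\delta_A\mathrm{I}(k_A+h_B<k_B+h_A)+(\delta_A\wedge\delta_B)\mathrm{I}(k_A+h_B=k_B+h_A)+\delta_B\mathrm{I}(k_A+h_B>k_B+h_A)\ (\ge\delta_A\wedge\delta_B)$, $\varepsilon_C=\varepsilon_A\wedge\varepsilon_B$, and $G_C=\sum_{k_C<i+j,\,h_A\le i\le k_A,\,h_B\le j\le k_B}|a_i||b_j|\varepsilon_C^{i+j-k_C-\delta_C}+G_A\sum_{h_B\le j\le k_B}|b_j|\varepsilon_C^{j+k_A+\delta_A-k_C-\delta_C}+G_B\sum_{h_A\le i\le k_A}|a_i|\varepsilon_C^{i+k_B+\delta_B-k_C-\delta_C}+G_AG_B\varepsilon_C^{k_A+k_B+\delta_A+\delta_B-k_C-\delta_C}$. (iv) Let $B$ be a pivotal $(h_B,k_B,\delta_B,G_B,\varepsilon_B)$-expansion with coefficients $b_l$. Put $h_C=-h_B$, $k_C=k_B-2h_B$, $c_{h_C}=b_{h_B}^{-1}$, $c_{h_C+n}=-b_{h_B}^{-1}\sum_{m=1}^n b_{h_B+m}c_{h_C+n-m}$ for $n=1,\dots,k_B-h_B$; $\delta_C=\delta_B$;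 $\tilde\varepsilon_B=\Big(\frac{|b_{h_B}|}{2\big(\sum_{h_B<i\le k_B}|b_i|\varepsilon_B^{i-h_B-\delta_B}+G_B\varepsilon_B^{k_B-h_B}\big)}\Big)^{1/\delta_B}$, $\varepsilon_C=\varepsilon_B\wedge\tilde\varepsilon_B$; $G_C=\big(\tfrac{|b_{h_B}|}{2}\big)^{-1}\Big(\sum_{k_B-h_B<i+j,\,h_B\le i\le k_B,\,h_C\le j\le k_C}|b_i||c_j|\varepsilon_C^{i+j-k_B+h_B-\delta_B}+G_B\sum_{h_C\le j\le k_C}|c_j|\varepsilon_C^{j+h_B}\Big)$. Then there exists $\varepsilon'_0$ with $\varepsilon_C\le\varepsilon'_0\le\varepsilon_0$ such that $B(\varepsilon)\ne0$ for $\varepsilon\in(0,\varepsilon'_0]$, and $C=1/B$ on $(0,\varepsilon'_0]$ is a pivotal $(h_C,k_C,\delta_C,G_C,\varepsilon_C)$-expansion with coefficients $c_l$. (v) Let $A$ be an $(h_A,k_A,\delta_A,G_A,\varepsilon_A)$-expansion with coefficients $a_l$ and $B$ a pivotal $(h_B,k_B,\delta_B,G_B,\varepsilon_B)$-expansion with coefficients $b_l$; let $h_C,k_C,c_l,\delta_C,G_C,\varepsilon_C,\tilde\varepsilon_B$ be as in (iv). Put $h_D=h_A-h_B$, $k_D=(k_A-h_B)\wedge(k_B-2h_B+h_A)$, $d_r=\sum_{i+j=r,\,h_A\le i\le k_A,\,h_C\le j\le k_C}a_ic_j$ for $h_D\le r\le k_D$, and $\delta_D=\delta_A\mathrm{I}(k_A-h_B<k_B-2h_B+h_A)+(\delta_A\wedge\delta_B)\mathrm{I}(k_A-h_B=k_B-2h_B+h_A)+\delta_B\mathrm{I}(k_A-h_B>k_B-2h_B+h_A)\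 (\ge\delta_A\wedge\delta_B)$. Then there exists $\varepsilon'_0$ with $\varepsilon_D\le\varepsilon'_0\le\varepsilon_0$ such that $B(\varepsilon)\ne0$ on $(0,\varepsilon'_0]$ and $D=A/B$ is an $(h_D,k_D,\delta_D,G_D,\varepsilon_D)$-expansion with coefficients $d_r$, where one may take either $\varepsilon_D=\varepsilon_A\wedge\varepsilon_C$ and $G_D=\sum_{k_D<i+j,\,h_A\le i\le k_A,\,h_C\le j\le k_C}|a_i||c_j|\varepsilon_D^{i+j-k_D-\delta_D}+G_A\sum_{h_C\le j\le k_C}|c_j|\varepsilon_D^{j+k_A+\delta_A-k_D-\delta_D}+G_C\sum_{h_A\le i\le k_A}|a_i|\varepsilon_D^{i+k_C+\delta_C-k_D-\delta_D}+G_AG_C\varepsilon_D^{k_A+k_C+\delta_A+\delta_C-k_D-\delta_D}$, or $\varepsilon_D=\varepsilon_A\wedge\varepsilon_B\wedge\tilde\varepsilon_B$ and $G_D=\big(\tfrac{|b_{h_B}|}{2}\big)^{-1}\Big(\sum_{k_A\wedge(h_A+k_B-h_B)<i+j,\,h_B\le i\le k_B,\,h_D\le j\le k_D}|b_i||d_j|\varepsilon_D^{i+j-k_D-h_B-\delta_D}+\sum_{k_A\wedge(h_A+k_B-h_B)<i\le k_A}|a_i|\varepsilon_D^{i-h_B-k_D-\delta_D}+G_A\varepsilon_D^{k_A+\delta_A-h_B-k_D-\delta_D}+G_B\sum_{h_D\le j\le k_D}|d_j|\varepsilon_D^{j+k_B+\delta_B-h_B-k_D-\delta_D}\Big)$.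
   Context: Let $0<\varepsilon_0\le1$. A function $A:(0,\varepsilon_0]\to\mathbb{R}$ (or defined on a smaller interval $(0,\varepsilon'_0]$) is an $(h,k,\delta,G,\varepsilon_A)$-expansion with coefficients $a_h,\dots,a_k$ (integers $h\le k$, reals $a_l$, $\delta\in(0,1]$, $G\in(0,\infty)$, $\varepsilon_A$ in $(0,\varepsilon_0]$ not exceeding the domain endpoint) if the remainder $o_A(\varepsilon):=A(\varepsilon)-\sum_{l=h}^k a_l\varepsilon^l$ satisfies $|o_A(\varepsilon)|\le G\varepsilon^{k+\delta}$ for $0<\varepsilon\le\varepsilon_A$. It is pivotal if $a_h\ne0$. $\mathrm{I}(\cdot)$ denotes the indicator, $\wedge$ the minimum. *)

theory Defs
  imports Complex_Main
begin

text \<open>An (h,k,delta,G,eA)-expansion on a domain (0,e0] with coefficients a.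
  Exponents are integers, so eps^l is written as eps powr of_int l (eps > 0).\<close>
definition is_expansion ::
  "real \<Rightarrow> (real \<Rightarrow> real) \<Rightarrow> int \<Rightarrow> int \<Rightarrow> (int \<Rightarrow> real) \<Rightarrow> real \<Rightarrow> real \<Rightarrow> real \<Rightarrow> bool" where
  "is_expansion e0 A h k a \<delta> G eA \<longleftrightarrow>
     h \<le> k \<and> 0 < \<delta> \<and> \<delta> \<le> 1 \<and> 0 < G \<and> 0 < eA \<and> eA \<le> e0 \<and>
     (\<forall>\<epsilon>. 0 < \<epsilon> \<and> \<epsilon> \<le> eA \<longrightarrow>
        \<bar>A \<epsilon> - (\<Sum>l=h..k. a l * \<epsilon> powr real_of_int l)\<bar> \<le> G * \<epsilon> powr (real_of_int k + \<delta>))"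

definition zext :: "int \<Rightarrow> int \<Rightarrow> (int \<Rightarrow> real) \<Rightarrow> int \<Rightarrow> real" where
  "zext h k a l = (if h \<le> l \<and> l \<le> k then a l else 0)"

text \<open>Coefficients of 1/B: invc b h n = c_{h_C + n} where h = h_B, h_C = -h_B.\<close>
function invc :: "(int \<Rightarrow> real) \<Rightarrow> int \<Rightarrow> nat \<Rightarrow> real" where
  "invc b h n = (if n = 0 then inverse (b h)
      else - inverse (b h) * (\<Sum>m=1..n. b (h + int m) * invc b h (n - m)))"
  by pat_completeness auto
termination by (relation "measure (\<lambda>(b,h,n). n)") auto

end

theory Submission
  imports Defs
begin

lemma shift:
  fixes x E p q e :: real
  assumes "0 < x" "x \<le> E" "0 \<le> e" "e = p - q"
  shows "x powr p \<le> E powr e * x powr q"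
proof -
  have "x powr p = x powr e * x powr q" using assms by (simp add: powr_add[symmetric])
  also have "\<dots> \<le> E powr e * x powr q"
    by (rule mult_right_mono) (use assms in \<open>auto intro: powr_mono2\<close>)
  finally show ?thesis .
qed

lemma sum_shift:
  fixes x E q :: real and c p e :: "'a \<Rightarrow> real"
  assumes "0 < x" "x \<le> E" "\<forall>i\<in>T. 0 \<le> c i" "\<forall>i\<in>T. 0 \<le> e i \<and> e i = p i - q"
  shows "(\<Sum>i\<in>T. c i * x powr p i) \<le> (\<Sum>i\<in>T. c i * E powr e i) * x powr q"
  unfolding sum_distrib_right
proof (rule sum_mono)
  fix i assume i: "i \<in> T"
  have "x powr p i \<le> E powr e i * x powr q" using assms i by (intro shift) auto
  then show "c i * x powr p i \<le> c i * E powr e i * x powr q"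
    using assms i by (simp add: mult.assoc mult_left_mono)
qed

lemma zext_sum:
  assumes "hC \<le> hA"
  shows "(\<Sum>l=hC..kC. zext hA kA a l * f l) = (\<Sum>l=hA..kA. a l * f l) - (\<Sum>l\<in>{hA..kA} \<inter> {kC<..}. (a l * f l :: real))"
proof -
  have "(\<Sum>l=hC..kC. zext hA kA a l * f l) = (\<Sum>l\<in>{hC..kC}. if l \<in> {hA..kA} then a l * f l else 0)"
    by (rule sum.cong) (auto simp: zext_def)
  also have "\<dots> = (\<Sum>l\<in>{hC..kC} \<inter> {hA..kA}. a l * f l)"
    by (rule sum.inter_restrict[symmetric]) simp
  also have "{hC..kC} \<inter> {hA..kA} = {hA..kA} \<inter> {..kC}" using assms by auto
  finally have 1: "(\<Sum>l=hC..kC. zext hA kA a l * f l) = (\<Sum>l\<in>{hA..kA} \<inter> {..kC}. a l * f l)" .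
  have 2: "{hA..kA} = ({hA..kA} \<inter> {..kC}) \<union> ({hA..kA} \<inter> {kC<..})" by auto
  have "(\<Sum>l=hA..kA. a l * f l) = (\<Sum>l\<in>{hA..kA} \<inter> {..kC}. a l * f l) + (\<Sum>l\<in>{hA..kA} \<inter> {kC<..}. a l * f l)"
    by (subst 2, rule sum.union_disjoint) auto
  then show ?thesis using 1 by simp
qed

lemma prod_split:
  fixes a b :: "int \<Rightarrow> real" and x :: real
  assumes "finite I" "finite J" "\<forall>i\<in>I. \<forall>j\<in>J. L \<le> i + j" "0 < x"
  shows "(\<Sum>i\<in>I. a i * x powr of_int i) * (\<Sum>j\<in>J. b j * x powr of_int j)
    = (\<Sum>r=L..K. (\<Sum>(i,j)\<in>{(i,j). i\<in>I \<and> j\<in>J \<and> i+j=r}. a i * b j) * x powr of_int r)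
      + (\<Sum>(i,j)\<in>{(i,j). i\<in>I \<and> j\<in>J \<and> K < i+j}. a i * b j * x powr of_int (i+j))"
proof -
  let ?g = "\<lambda>(i,j). a i * b j * x powr of_int (i+j)"
  have 1: "(\<Sum>i\<in>I. a i * x powr of_int i) * (\<Sum>j\<in>J. b j * x powr of_int j) = sum ?g (I \<times> J)"
    by (simp add: sum_product sum.cartesian_product powr_add mult_ac)
  let ?P1 = "{(i,j). i\<in>I \<and> j\<in>J \<and> i+j \<le> K}" and ?P2 = "{(i,j). i\<in>I \<and> j\<in>J \<and> K < i+j}"
  have fin: "finite ?P1" "finite ?P2"
    by (rule finite_subset[of _ "I \<times> J"], auto simp: assms)+
  have 2: "I \<times> J = ?P1 \<union> ?P2" by auto
  have 3: "sum ?g (I \<times> J) = sum ?g ?P1 + sum ?g ?P2"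
    by (subst 2, rule sum.union_disjoint) (use fin in auto)
  have 4: "sum ?g ?P1 = (\<Sum>r=L..K. sum ?g {p. p \<in> ?P1 \<and> (\<lambda>(i,j). i+j) p = r})"
    by (rule sum.group[symmetric]) (use fin assms in auto)
  have 5: "sum ?g {p. p \<in> ?P1 \<and> (\<lambda>(i,j). i+j) p = r} =
       (\<Sum>(i,j)\<in>{(i,j). i\<in>I \<and> j\<in>J \<and> i+j=r}. a i * b j) * x powr of_int r" if "r \<in> {L..K}" for r
  proof -
    have "{p. p \<in> ?P1 \<and> (\<lambda>(i,j). i+j) p = r} = {(i,j). i\<in>I \<and> j\<in>J \<and> i+j=r}" using that by auto
    then show ?thesis unfolding sum_distrib_right
      by (auto intro!: sum.cong simp: case_prod_beta)
  qed
  show ?thesis using 1 3 4 5 by simp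
qed

lemma pair_fiber:
  fixes f :: "int \<Rightarrow> int \<Rightarrow> real"
  assumes "finite I"
  shows "(\<Sum>(i,j)\<in>{(i,j). i\<in>I \<and> j\<in>J \<and> i+j=r}. f i j) = (\<Sum>i\<in>I. if r - i \<in> J then f i (r - i) else 0)"
proof -
  have e: "{(i,j). i\<in>I \<and> j\<in>J \<and> i+j=r} = (\<lambda>i. (i, r - i)) ` (I \<inter> {i. r - i \<in> J})" by auto
  have "inj_on (\<lambda>i. (i, r - i)) (I \<inter> {i. r - i \<in> J})" by (auto simp: inj_on_def)
  then have "(\<Sum>(i,j)\<in>{(i,j). i\<in>I \<and> j\<in>J \<and> i+j=r}. f i j) = (\<Sum>i\<in>I \<inter> {i. r - i \<in> J}. f i (r - i))"
    by (simp add: e sum.reindex)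
  also have "\<dots> = (\<Sum>i\<in>I. if r - i \<in> J then f i (r - i) else 0)"
    using sum.inter_restrict[OF assms, of "\<lambda>i. f i (r - i)" "{i. r - i \<in> J}"] by simp
  finally show ?thesis .
qed

lemma expD:
  assumes "is_expansion e0 A h k a \<delta> G eA"
  shows "h \<le> k" "0 < \<delta>" "\<delta> \<le> 1" "0 < G" "0 < eA" "eA \<le> e0"
    "\<And>\<epsilon>. 0 < \<epsilon> \<Longrightarrow> \<epsilon> \<le> eA \<Longrightarrow>
        \<bar>A \<epsilon> - (\<Sum>l=h..k. a l * \<epsilon> powr real_of_int l)\<bar> \<le> G * \<epsilon> powr (real_of_int k + \<delta>)"
  using assms unfolding is_expansion_def by auto

lemma add_exp:
  assumes A: "is_expansion e0 A hA kA a \<delta>A GA \<epsilon>A" and B: "is_expansion e0 B hB kB b \<delta>B GB \<epsilon>B"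
    and hC: "hC = min hA hB" and kC: "kC = min kA kB"
    and dC: "\<delta>C = (if kA < kB then \<delta>A else if kA = kB then min \<delta>A \<delta>B else \<delta>B)"
    and eC: "\<epsilon>C = min \<epsilon>A \<epsilon>B"
    and GC: "GC = GA * \<epsilon>C powr (real_of_int kA + \<delta>A - real_of_int kC - \<delta>C)
             + (\<Sum>i\<in>{kC<..kA}. \<bar>a i\<bar> * \<epsilon>C powr (real_of_int (i - kC) - \<delta>C))
             + GB * \<epsilon>C powr (real_of_int kB + \<delta>B - real_of_int kC - \<delta>C)
             + (\<Sum>j\<in>{kC<..kB}. \<bar>b j\<bar> * \<epsilon>C powr (real_of_int (j - kC) - \<delta>C))"
  shows "is_expansion e0 (\<lambda>\<epsilon>. A \<epsilon> + B \<epsilon>) hC kC (\<lambda>r. zext hA kA a r + zext hB kB b r) \<delta>C GC \<epsilon>C"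
proof -
  note a = expD[OF A] and b = expD[OF B]
  have eApos: "0 < \<epsilon>C" "\<epsilon>C \<le> e0" using a b eC by auto
  have dCp: "0 < \<delta>C" "\<delta>C \<le> 1" using a b dC by auto
  have exA: "0 \<le> real_of_int kA + \<delta>A - real_of_int kC - \<delta>C"
  proof (cases "kA < kB")
    case False
    then have "kA = kB \<or> kB + 1 \<le> kA" by auto
    then show ?thesis using dC kC a b False by (auto simp: min_def)
  qed (use dC kC in auto)
  have exB: "0 \<le> real_of_int kB + \<delta>B - real_of_int kC - \<delta>C"
  proof (cases "kB < kA")
    case False
    then have "kA = kB \<or> kA + 1 \<le> kB" by auto
    then show ?thesis using dC kC a b False by (auto simp: min_def)
  qed (use dC kC in \<open>auto simp: min_def\<close>)
  have sA: "0 \<le> (\<Sum>i\<in>{kC<..kA}. \<bar>a i\<bar> * \<epsilon>C powr (real_of_int (i - kC) - \<delta>C))"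
    by (rule sum_nonneg) auto
  have sB: "0 \<le> (\<Sum>j\<in>{kC<..kB}. \<bar>b j\<bar> * \<epsilon>C powr (real_of_int (j - kC) - \<delta>C))"
    by (rule sum_nonneg) auto
  have GCp: "0 < GC" unfolding GC using sA sB a(4) b(4) eApos
    by (intro add_pos_nonneg add_nonneg_nonneg mult_pos_pos mult_nonneg_nonneg) auto
  have hk: "hC \<le> kC" using hC kC a(1) b(1) by auto
  have bnd: "\<bar>A \<epsilon> + B \<epsilon> - (\<Sum>l=hC..kC. (zext hA kA a l + zext hB kB b l) * \<epsilon> powr real_of_int l)\<bar>
       \<le> GC * \<epsilon> powr (real_of_int kC + \<delta>C)" if e: "0 < \<epsilon>" "\<epsilon> \<le> \<epsilon>C" for \<epsilon>
  proof -
    let ?q = "real_of_int kC + \<delta>C"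
    let ?TA = "{hA..kA} \<inter> {kC<..}" and ?TB = "{hB..kB} \<inter> {kC<..}"
    have zA: "(\<Sum>l=hC..kC. zext hA kA a l * \<epsilon> powr real_of_int l) = (\<Sum>l=hA..kA. a l * \<epsilon> powr real_of_int l) - (\<Sum>l\<in>?TA. a l * \<epsilon> powr real_of_int l)"
      by (rule zext_sum) (simp add: hC)
    have zB: "(\<Sum>l=hC..kC. zext hB kB b l * \<epsilon> powr real_of_int l) = (\<Sum>l=hB..kB. b l * \<epsilon> powr real_of_int l) - (\<Sum>l\<in>?TB. b l * \<epsilon> powr real_of_int l)"
      by (rule zext_sum) (simp add: hC)
    have eq: "A \<epsilon> + B \<epsilon> - (\<Sum>l=hC..kC. (zext hA kA a l + zext hB kB b l) * \<epsilon> powr real_of_int l)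
       = (A \<epsilon> - (\<Sum>l=hA..kA. a l * \<epsilon> powr real_of_int l)) + (\<Sum>l\<in>?TA. a l * \<epsilon> powr real_of_int l)
       + (B \<epsilon> - (\<Sum>l=hB..kB. b l * \<epsilon> powr real_of_int l)) + (\<Sum>l\<in>?TB. b l * \<epsilon> powr real_of_int l)"
      using zA zB by (simp add: distrib_right sum.distrib)
    have eA: "\<epsilon> \<le> \<epsilon>A" "\<epsilon> \<le> \<epsilon>B" using e eC by auto
    have t1: "\<bar>A \<epsilon> - (\<Sum>l=hA..kA. a l * \<epsilon> powr real_of_int l)\<bar> \<le> GA * \<epsilon>C powr (real_of_int kA + \<delta>A - real_of_int kC - \<delta>C) * \<epsilon> powr ?q"
    proof -
      have "\<epsilon> powr (real_of_int kA + \<delta>A) \<le> \<epsilon>C powr (real_of_int kA + \<delta>A - real_of_int kC - \<delta>C) * \<epsilon> powr ?q"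
        using e exA by (intro shift) auto
      then have "GA * \<epsilon> powr (real_of_int kA + \<delta>A) \<le> GA * (\<epsilon>C powr (real_of_int kA + \<delta>A - real_of_int kC - \<delta>C) * \<epsilon> powr ?q)"
        using a(4) by (intro mult_left_mono) auto
      then show ?thesis using a(7)[OF e(1) eA(1)] by (simp add: mult.assoc)
    qed
    have t3: "\<bar>B \<epsilon> - (\<Sum>l=hB..kB. b l * \<epsilon> powr real_of_int l)\<bar> \<le> GB * \<epsilon>C powr (real_of_int kB + \<delta>B - real_of_int kC - \<delta>C) * \<epsilon> powr ?q"
    proof -
      have "\<epsilon> powr (real_of_int kB + \<delta>B) \<le> \<epsilon>C powr (real_of_int kB + \<delta>B - real_of_int kC - \<delta>C) * \<epsilon> powr ?q"
        using e exB by (intro shift) auto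
      then have "GB * \<epsilon> powr (real_of_int kB + \<delta>B) \<le> GB * (\<epsilon>C powr (real_of_int kB + \<delta>B - real_of_int kC - \<delta>C) * \<epsilon> powr ?q)"
        using b(4) by (intro mult_left_mono) auto
      then show ?thesis using b(7)[OF e(1) eA(2)] by (simp add: mult.assoc)
    qed
    have t2: "\<bar>\<Sum>l\<in>?TA. a l * \<epsilon> powr real_of_int l\<bar> \<le> (\<Sum>i\<in>{kC<..kA}. \<bar>a i\<bar> * \<epsilon>C powr (real_of_int (i - kC) - \<delta>C)) * \<epsilon> powr ?q"
    proof -
      have "\<bar>\<Sum>l\<in>?TA. a l * \<epsilon> powr real_of_int l\<bar> \<le> (\<Sum>l\<in>?TA. \<bar>a l\<bar> * \<epsilon> powr real_of_int l)"
        by (rule order_trans[OF sum_abs]) (simp add: abs_mult)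
      also have "\<dots> \<le> (\<Sum>l\<in>{kC<..kA}. \<bar>a l\<bar> * \<epsilon> powr real_of_int l)"
        by (rule sum_mono2) auto
      also have "\<dots> \<le> (\<Sum>i\<in>{kC<..kA}. \<bar>a i\<bar> * \<epsilon>C powr (real_of_int (i - kC) - \<delta>C)) * \<epsilon> powr ?q"
        using e dCp by (intro sum_shift) auto
      finally show ?thesis .
    qed
    have t4: "\<bar>\<Sum>l\<in>?TB. b l * \<epsilon> powr real_of_int l\<bar> \<le> (\<Sum>i\<in>{kC<..kB}. \<bar>b i\<bar> * \<epsilon>C powr (real_of_int (i - kC) - \<delta>C)) * \<epsilon> powr ?q"
    proof -
      have "\<bar>\<Sum>l\<in>?TB. b l * \<epsilon> powr real_of_int l\<bar> \<le> (\<Sum>l\<in>?TB. \<bar>b l\<bar> * \<epsilon> powr real_of_int l)"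
        by (rule order_trans[OF sum_abs]) (simp add: abs_mult)
      also have "\<dots> \<le> (\<Sum>l\<in>{kC<..kB}. \<bar>b l\<bar> * \<epsilon> powr real_of_int l)"
        by (rule sum_mono2) auto
      also have "\<dots> \<le> (\<Sum>i\<in>{kC<..kB}. \<bar>b i\<bar> * \<epsilon>C powr (real_of_int (i - kC) - \<delta>C)) * \<epsilon> powr ?q"
        using e dCp by (intro sum_shift) auto
      finally show ?thesis .
    qed
    have "GC * \<epsilon> powr ?q = GA * \<epsilon>C powr (real_of_int kA + \<delta>A - real_of_int kC - \<delta>C) * \<epsilon> powr ?q
       + (\<Sum>i\<in>{kC<..kA}. \<bar>a i\<bar> * \<epsilon>C powr (real_of_int (i - kC) - \<delta>C)) * \<epsilon> powr ?q
       + GB * \<epsilon>C powr (real_of_int kB + \<delta>B - real_of_int kC - \<delta>C) * \<epsilon> powr ?q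
       + (\<Sum>i\<in>{kC<..kB}. \<bar>b i\<bar> * \<epsilon>C powr (real_of_int (i - kC) - \<delta>C)) * \<epsilon> powr ?q"
      unfolding GC by (simp add: distrib_right)
    then show ?thesis unfolding eq using t1 t2 t3 t4 by linarith
  qed
  show ?thesis unfolding is_expansion_def using hk dCp GCp eApos bnd by auto
qed

lemma exnn:
  fixes z :: int and dA dC :: real
  assumes "0 \<le> z" "dC \<le> dA \<or> 1 \<le> z" "dC \<le> 1" "0 \<le> dA"
  shows "0 \<le> real_of_int z + dA - dC"
proof -
  have "0 \<le> real_of_int z" using assms by simp
  moreover have "dC \<le> dA \<or> 1 \<le> real_of_int z" using assms by auto
  ultimately show ?thesis using assms by linarith
qed

lemma abs_sum_le: "\<bar>\<Sum>i\<in>I. a i * (x::real) powr p i\<bar> \<le> (\<Sum>i\<in>I. \<bar>a i\<bar> * x powr p i)"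
  by (rule order_trans[OF sum_abs]) (simp add: abs_mult)

lemma rem_mult:
  fixes o' G x q pk :: real and c :: "int \<Rightarrow> real"
  assumes "\<bar>o'\<bar> \<le> G * x powr pk" "0 < x" "x \<le> E" "0 \<le> G"
    "\<forall>j\<in>J. 0 \<le> e j \<and> e j = real_of_int j + pk - q"
  shows "\<bar>o' * (\<Sum>j\<in>J. c j * x powr real_of_int j)\<bar> \<le> G * (\<Sum>j\<in>J. \<bar>c j\<bar> * E powr e j) * x powr q"
proof -
  have "\<bar>o' * (\<Sum>j\<in>J. c j * x powr real_of_int j)\<bar> \<le> (G * x powr pk) * (\<Sum>j\<in>J. \<bar>c j\<bar> * x powr real_of_int j)"
    unfolding abs_mult by (rule mult_mono[OF assms(1) abs_sum_le]) (use assms(4) in \<open>auto intro: sum_nonneg\<close>)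
  also have "\<dots> = G * (\<Sum>j\<in>J. \<bar>c j\<bar> * x powr (real_of_int j + pk))"
    using assms(2) by (simp add: sum_distrib_left sum_distrib_right powr_add mult_ac)
  also have "\<dots> \<le> G * ((\<Sum>j\<in>J. \<bar>c j\<bar> * E powr e j) * x powr q)"
    by (rule mult_left_mono[OF sum_shift]) (use assms in auto)
  finally show ?thesis by (simp add: mult.assoc)
qed

lemma mult_exp:
  assumes A: "is_expansion e0 A hA kA a \<delta>A GA \<epsilon>A" and B: "is_expansion e0 B hB kB b \<delta>B GB \<epsilon>B"
    and hC: "hC = hA + hB" and kC: "kC = min (kA + hB) (kB + hA)"
    and cc: "cc = (\<lambda>r. \<Sum>(i,j)\<in>{(i,j). i \<in> {hA..kA} \<and> j \<in> {hB..kB} \<and> i + j = r}. a i * b j)"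
    and dC: "\<delta>C = (if kA + hB < kB + hA then \<delta>A else if kA + hB = kB + hA then min \<delta>A \<delta>B else \<delta>B)"
    and eC: "\<epsilon>C = min \<epsilon>A \<epsilon>B"
    and GC: "GC = (\<Sum>(i,j)\<in>{(i,j). i \<in> {hA..kA} \<and> j \<in> {hB..kB} \<and> kC < i + j}.
                   \<bar>a i\<bar> * \<bar>b j\<bar> * \<epsilon>C powr (real_of_int (i + j - kC) - \<delta>C))
             + GA * (\<Sum>j=hB..kB. \<bar>b j\<bar> * \<epsilon>C powr (real_of_int (j + kA - kC) + \<delta>A - \<delta>C))
             + GB * (\<Sum>i=hA..kA. \<bar>a i\<bar> * \<epsilon>C powr (real_of_int (i + kB - kC) + \<delta>B - \<delta>C))
             + GA * GB * \<epsilon>C powr (real_of_int (kA + kB - kC) + \<delta>A + \<delta>B - \<delta>C)"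
  shows "is_expansion e0 (\<lambda>\<epsilon>. A \<epsilon> * B \<epsilon>) hC kC cc \<delta>C GC \<epsilon>C"
proof -
  note a = expD[OF A] and b = expD[OF B]
  have eApos: "0 < \<epsilon>C" "\<epsilon>C \<le> e0" using a b eC by auto
  have dCp: "0 < \<delta>C" "\<delta>C \<le> 1" using a b dC by auto
  have dCs: "\<delta>C \<le> \<delta>A \<or> kC < kA + hB" "\<delta>C \<le> \<delta>B \<or> kC < kB + hA"
    using dC kC by (auto simp: min_def)
  have dCab: "\<delta>C \<le> \<delta>A + \<delta>B" using dC a b by auto
  let ?P2 = "{(i,j). i \<in> {hA..kA} \<and> j \<in> {hB..kB} \<and> kC < i + j}"
  have finP2: "finite ?P2" by (rule finite_subset[of _ "{hA..kA} \<times> {hB..kB}"]) auto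
  have s1: "0 \<le> (\<Sum>(i,j)\<in>?P2. \<bar>a i\<bar> * \<bar>b j\<bar> * \<epsilon>C powr (real_of_int (i + j - kC) - \<delta>C))"
    by (rule sum_nonneg) auto
  have s2: "0 \<le> GA * (\<Sum>j=hB..kB. \<bar>b j\<bar> * \<epsilon>C powr (real_of_int (j + kA - kC) + \<delta>A - \<delta>C))"
    using a by (intro mult_nonneg_nonneg sum_nonneg) auto
  have s3: "0 \<le> GB * (\<Sum>i=hA..kA. \<bar>a i\<bar> * \<epsilon>C powr (real_of_int (i + kB - kC) + \<delta>B - \<delta>C))"
    using b by (intro mult_nonneg_nonneg sum_nonneg) auto
  have GCp: "0 < GC" unfolding GC using s1 s2 s3 a(4) b(4) eApos
    by (intro add_pos_nonneg add_nonneg_pos add_nonneg_nonneg mult_pos_pos) auto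
  have hk: "hC \<le> kC" using hC kC a(1) b(1) by auto
  have bnd: "\<bar>A \<epsilon> * B \<epsilon> - (\<Sum>l=hC..kC. cc l * \<epsilon> powr real_of_int l)\<bar>
       \<le> GC * \<epsilon> powr (real_of_int kC + \<delta>C)" if e: "0 < \<epsilon>" "\<epsilon> \<le> \<epsilon>C" for \<epsilon>
  proof -
    let ?q = "real_of_int kC + \<delta>C"
    define PA where "PA = (\<Sum>l=hA..kA. a l * \<epsilon> powr real_of_int l)"
    define PB where "PB = (\<Sum>l=hB..kB. b l * \<epsilon> powr real_of_int l)"
    define oA where "oA = A \<epsilon> - PA"
    define oB where "oB = B \<epsilon> - PB"
    define S2 where "S2 = (\<Sum>(i,j)\<in>?P2. a i * b j * \<epsilon> powr of_int (i+j))"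
    have split: "PA * PB = (\<Sum>l=hC..kC. cc l * \<epsilon> powr real_of_int l) + S2"
      unfolding PA_def PB_def S2_def cc hC by (rule prod_split) (use e in auto)
    have eq: "A \<epsilon> * B \<epsilon> - (\<Sum>l=hC..kC. cc l * \<epsilon> powr real_of_int l) = S2 + oA * PB + oB * PA + oA * oB"
      using split unfolding oA_def oB_def by (simp add: algebra_simps)
    have eA: "\<epsilon> \<le> \<epsilon>A" "\<epsilon> \<le> \<epsilon>B" using e eC by auto
    have oAb: "\<bar>oA\<bar> \<le> GA * \<epsilon> powr (real_of_int kA + \<delta>A)" unfolding oA_def PA_def using a(7)[OF e(1) eA(1)] .
    have oBb: "\<bar>oB\<bar> \<le> GB * \<epsilon> powr (real_of_int kB + \<delta>B)" unfolding oB_def PB_def using b(7)[OF e(1) eA(2)] .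
    have t1: "\<bar>S2\<bar> \<le> (\<Sum>(i,j)\<in>?P2. \<bar>a i\<bar> * \<bar>b j\<bar> * \<epsilon>C powr (real_of_int (i + j - kC) - \<delta>C)) * \<epsilon> powr ?q"
    proof -
      have "\<bar>S2\<bar> \<le> (\<Sum>p\<in>?P2. (\<bar>a (fst p)\<bar> * \<bar>b (snd p)\<bar>) * \<epsilon> powr of_int (fst p + snd p))"
        unfolding S2_def by (rule order_trans[OF sum_abs]) (simp add: abs_mult case_prod_beta)
      also have "\<dots> \<le> (\<Sum>p\<in>?P2. (\<bar>a (fst p)\<bar> * \<bar>b (snd p)\<bar>) * \<epsilon>C powr (real_of_int (fst p + snd p - kC) - \<delta>C)) * \<epsilon> powr ?q"
      proof (rule sum_shift)
        show "\<forall>p\<in>?P2. 0 \<le> real_of_int (fst p + snd p - kC) - \<delta>C \<and>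
          real_of_int (fst p + snd p - kC) - \<delta>C = real_of_int (fst p + snd p) - ?q"
        proof
          fix p assume "p \<in> ?P2"
          then have "1 \<le> fst p + snd p - kC" by auto
          then have "1 \<le> real_of_int (fst p + snd p - kC)" by linarith
          then show "0 \<le> real_of_int (fst p + snd p - kC) - \<delta>C \<and>
            real_of_int (fst p + snd p - kC) - \<delta>C = real_of_int (fst p + snd p) - ?q" using dCp by auto
        qed
      qed (use e in auto)
      also have "\<dots> = (\<Sum>(i,j)\<in>?P2. \<bar>a i\<bar> * \<bar>b j\<bar> * \<epsilon>C powr (real_of_int (i + j - kC) - \<delta>C)) * \<epsilon> powr ?q"
        by (simp add: case_prod_beta)
      finally show ?thesis .
    qed
    have t2: "\<bar>oA * PB\<bar> \<le> GA * (\<Sum>j=hB..kB. \<bar>b j\<bar> * \<epsilon>C powr (real_of_int (j + kA - kC) + \<delta>A - \<delta>C)) * \<epsilon> powr ?q"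
      unfolding PB_def
    proof (rule rem_mult[OF oAb e])
      show "\<forall>j\<in>{hB..kB}. 0 \<le> real_of_int (j + kA - kC) + \<delta>A - \<delta>C \<and>
        real_of_int (j + kA - kC) + \<delta>A - \<delta>C = real_of_int j + (real_of_int kA + \<delta>A) - ?q"
      proof
        fix j assume j: "j \<in> {hB..kB}"
        have "0 \<le> real_of_int (j + kA - kC) + \<delta>A - \<delta>C"
          by (rule exnn) (use j kC dCs dCp a in auto)
        then show "0 \<le> real_of_int (j + kA - kC) + \<delta>A - \<delta>C \<and>
          real_of_int (j + kA - kC) + \<delta>A - \<delta>C = real_of_int j + (real_of_int kA + \<delta>A) - ?q" by simp
      qed
    qed (use a in auto)
    have t3: "\<bar>oB * PA\<bar> \<le> GB * (\<Sum>i=hA..kA. \<bar>a i\<bar> * \<epsilon>C powr (real_of_int (i + kB - kC) + \<delta>B - \<delta>C)) * \<epsilon> powr ?q"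
      unfolding PA_def
    proof (rule rem_mult[OF oBb e])
      show "\<forall>j\<in>{hA..kA}. 0 \<le> real_of_int (j + kB - kC) + \<delta>B - \<delta>C \<and>
        real_of_int (j + kB - kC) + \<delta>B - \<delta>C = real_of_int j + (real_of_int kB + \<delta>B) - ?q"
      proof
        fix j assume j: "j \<in> {hA..kA}"
        have "0 \<le> real_of_int (j + kB - kC) + \<delta>B - \<delta>C"
          by (rule exnn) (use j kC dCs dCp b in auto)
        then show "0 \<le> real_of_int (j + kB - kC) + \<delta>B - \<delta>C \<and>
          real_of_int (j + kB - kC) + \<delta>B - \<delta>C = real_of_int j + (real_of_int kB + \<delta>B) - ?q" by simp
      qed
    qed (use b in auto)
    have t4: "\<bar>oA * oB\<bar> \<le> GA * GB * \<epsilon>C powr (real_of_int (kA + kB - kC) + \<delta>A + \<delta>B - \<delta>C) * \<epsilon> powr ?q"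
    proof -
      have "\<bar>oA * oB\<bar> \<le> (GA * \<epsilon> powr (real_of_int kA + \<delta>A)) * (GB * \<epsilon> powr (real_of_int kB + \<delta>B))"
        unfolding abs_mult by (rule mult_mono[OF oAb oBb]) (use a(4) in auto)
      also have "\<dots> = GA * GB * \<epsilon> powr (real_of_int kA + \<delta>A + (real_of_int kB + \<delta>B))"
        using e by (simp add: powr_add mult_ac)
      also have "\<dots> \<le> GA * GB * (\<epsilon>C powr (real_of_int (kA + kB - kC) + \<delta>A + \<delta>B - \<delta>C) * \<epsilon> powr ?q)"
      proof (rule mult_left_mono[OF shift])
        have "0 \<le> kA + kB - kC" using kC b(1) by auto
        then have "0 \<le> real_of_int (kA + kB - kC)" by linarith
        then show "0 \<le> real_of_int (kA + kB - kC) + \<delta>A + \<delta>B - \<delta>C" using dCab by linarith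
      qed (use e a b in auto)
      finally show ?thesis by (simp add: mult.assoc)
    qed
    have "GC * \<epsilon> powr ?q = (\<Sum>(i,j)\<in>?P2. \<bar>a i\<bar> * \<bar>b j\<bar> * \<epsilon>C powr (real_of_int (i + j - kC) - \<delta>C)) * \<epsilon> powr ?q
       + GA * (\<Sum>j=hB..kB. \<bar>b j\<bar> * \<epsilon>C powr (real_of_int (j + kA - kC) + \<delta>A - \<delta>C)) * \<epsilon> powr ?q
       + GB * (\<Sum>i=hA..kA. \<bar>a i\<bar> * \<epsilon>C powr (real_of_int (i + kB - kC) + \<delta>B - \<delta>C)) * \<epsilon> powr ?q
       + GA * GB * \<epsilon>C powr (real_of_int (kA + kB - kC) + \<delta>A + \<delta>B - \<delta>C) * \<epsilon> powr ?q"
      unfolding GC by (simp add: distrib_right)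
    moreover have "\<bar>S2 + oA * PB + oB * PA + oA * oB\<bar> \<le> \<bar>S2\<bar> + \<bar>oA * PB\<bar> + \<bar>oB * PA\<bar> + \<bar>oA * oB\<bar>"
      by linarith
    ultimately show ?thesis unfolding eq using t1 t2 t3 t4 by linarith
  qed
  show ?thesis unfolding is_expansion_def using hk dCp GCp eApos bnd by auto
qed

lemma invc_conv_nat:
  assumes "b h \<noteq> 0"
  shows "(\<Sum>m=0..N. b (h + int m) * invc b h (N - m)) = (if N = 0 then 1 else 0)"
proof (cases "N = 0")
  case True
  then show ?thesis using assms by (simp add: invc.simps[of b h 0])
next
  case False
  have i: "invc b h N = - inverse (b h) * (\<Sum>m=1..N. b (h + int m) * invc b h (N - m))"
    using invc.simps[of b h N] False by (simp del: invc.simps)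
  have "(\<Sum>m=0..N. b (h + int m) * invc b h (N - m)) = b h * invc b h N + (\<Sum>m=Suc 0..N. b (h + int m) * invc b h (N - m))"
    by (subst sum.atLeast_Suc_atMost) auto
  also have "\<dots> = 0" unfolding i using assms by (simp add: field_simps)
  finally show ?thesis using False by simp
qed

lemma invc_conv:
  assumes bh: "b hB \<noteq> 0" and n: "n \<le> kB - hB"
  shows "(\<Sum>i\<in>{hB..kB}. if n - i \<in> {-hB..kB - 2*hB} then b i * invc b hB (nat (n - i - - hB)) else 0)
         = (if n = 0 then 1 else 0)"
proof (cases "n < 0")
  case True
  then show ?thesis by (intro trans[OF sum.neutral]) auto
next
  case False
  define N where "N = nat n"
  have nN: "n = int N" using False N_def by auto
  have "(\<Sum>i\<in>{hB..kB}. if n - i \<in> {-hB..kB - 2*hB} then b i * invc b hB (nat (n - i - - hB)) else 0)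
      = (\<Sum>i\<in>{hB..kB} \<inter> {i. n - i \<in> {-hB..kB - 2*hB}}. b i * invc b hB (nat (n - i - - hB)))"
    using sum.inter_restrict[of "{hB..kB}" "\<lambda>i. b i * invc b hB (nat (n - i - - hB))" "{i. n - i \<in> {-hB..kB - 2*hB}}"]
    by simp
  also have "{hB..kB} \<inter> {i. n - i \<in> {-hB..kB - 2*hB}} = (\<lambda>m. hB + int m) ` {0..N}"
  proof -
    have "x \<in> (\<lambda>m. hB + int m) ` {0..N}" if "hB \<le> x" "x \<le> n + hB" for x
      using that by (intro image_eqI[of _ _ "nat (x - hB)"]) (auto simp: nN)
    then show ?thesis using n by (auto simp: nN)
  qed
  also have "(\<Sum>i\<in>(\<lambda>m. hB + int m) ` {0..N}. b i * invc b hB (nat (n - i - - hB)))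
     = (\<Sum>m=0..N. b (hB + int m) * invc b hB (N - m))"
    by (subst sum.reindex) (auto simp: inj_on_def nN nat_diff_distrib intro!: sum.cong)
  also have "\<dots> = (if n = 0 then 1 else 0)" using invc_conv_nat[of b hB N, OF bh] by (simp add: nN)
  finally show ?thesis .
qed

lemma lowB:
  assumes B: "is_expansion e0 B hB kB b \<delta>B GB \<epsilon>B" and bh: "b hB \<noteq> 0"
    and S: "S = (\<Sum>i\<in>{hB<..kB}. \<bar>b i\<bar> * \<epsilon>B powr (real_of_int (i - hB) - \<delta>B)) + GB * \<epsilon>B powr real_of_int (kB - hB)"
    and et: "et = (\<bar>b hB\<bar> / (2 * S)) powr (1 / \<delta>B)"
  shows "0 < S" "0 < et"
    "\<And>\<epsilon>. 0 < \<epsilon> \<Longrightarrow> \<epsilon> \<le> \<epsilon>B \<Longrightarrow> \<epsilon> \<le> et \<Longrightarrow> \<bar>b hB\<bar> / 2 * \<epsilon> powr real_of_int hB \<le> \<bar>B \<epsilon>\<bar>"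
proof -
  note b = expD[OF B]
  have s0: "0 \<le> (\<Sum>i\<in>{hB<..kB}. \<bar>b i\<bar> * \<epsilon>B powr (real_of_int (i - hB) - \<delta>B))" by (rule sum_nonneg) auto
  show Sp: "0 < S" unfolding S using s0 b by (intro add_nonneg_pos mult_pos_pos) auto
  have X: "0 < \<bar>b hB\<bar> / (2 * S)" using Sp bh by auto
  then show etp: "0 < et" unfolding et using Sp bh by simp
  fix \<epsilon> assume e: "0 < \<epsilon>" "\<epsilon> \<le> \<epsilon>B" "\<epsilon> \<le> et"
  let ?q = "real_of_int hB + \<delta>B"
  have split: "(\<Sum>l=hB..kB. b l * \<epsilon> powr real_of_int l) = b hB * \<epsilon> powr real_of_int hB + (\<Sum>l\<in>{hB<..kB}. b l * \<epsilon> powr real_of_int l)"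
  proof -
    have "{hB..kB} = insert hB {hB<..kB}" using b(1) by auto
    then show ?thesis by simp
  qed
  have t1: "\<bar>B \<epsilon> - (\<Sum>l=hB..kB. b l * \<epsilon> powr real_of_int l)\<bar> \<le> GB * \<epsilon>B powr real_of_int (kB - hB) * \<epsilon> powr ?q"
  proof -
    have "\<epsilon> powr (real_of_int kB + \<delta>B) \<le> \<epsilon>B powr real_of_int (kB - hB) * \<epsilon> powr ?q"
      using e b(1) by (intro shift) auto
    then have "GB * \<epsilon> powr (real_of_int kB + \<delta>B) \<le> GB * (\<epsilon>B powr real_of_int (kB - hB) * \<epsilon> powr ?q)"
      using b(4) by (intro mult_left_mono) auto
    then show ?thesis using b(7)[OF e(1,2)] by (simp add: mult.assoc)
  qed
  have t2: "\<bar>\<Sum>l\<in>{hB<..kB}. b l * \<epsilon> powr real_of_int l\<bar> \<le> (\<Sum>i\<in>{hB<..kB}. \<bar>b i\<bar> * \<epsilon>B powr (real_of_int (i - hB) - \<delta>B)) * \<epsilon> powr ?q"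
  proof -
    have "\<bar>\<Sum>l\<in>{hB<..kB}. b l * \<epsilon> powr real_of_int l\<bar> \<le> (\<Sum>l\<in>{hB<..kB}. \<bar>b l\<bar> * \<epsilon> powr real_of_int l)"
      by (rule abs_sum_le)
    also have "\<dots> \<le> (\<Sum>i\<in>{hB<..kB}. \<bar>b i\<bar> * \<epsilon>B powr (real_of_int (i - hB) - \<delta>B)) * \<epsilon> powr ?q"
    proof (rule sum_shift)
      show "\<forall>i\<in>{hB<..kB}. 0 \<le> real_of_int (i - hB) - \<delta>B \<and> real_of_int (i - hB) - \<delta>B = real_of_int i - ?q"
      proof
        fix i assume "i \<in> {hB<..kB}"
        then have "1 \<le> real_of_int (i - hB)" by simp
        then show "0 \<le> real_of_int (i - hB) - \<delta>B \<and> real_of_int (i - hB) - \<delta>B = real_of_int i - ?q" using b by auto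
      qed
    qed (use e in auto)
    finally show ?thesis .
  qed
  have dle: "\<epsilon> powr \<delta>B \<le> \<bar>b hB\<bar> / (2 * S)"
  proof -
    have "\<epsilon> powr \<delta>B \<le> et powr \<delta>B" using e b by (intro powr_mono2) auto
    also have "et powr \<delta>B = \<bar>b hB\<bar> / (2 * S)" unfolding et using X b Sp by (simp add: powr_powr)
    finally show ?thesis .
  qed
  have "\<bar>B \<epsilon> - b hB * \<epsilon> powr real_of_int hB\<bar> \<le> S * \<epsilon> powr ?q"
  proof -
    have "\<bar>B \<epsilon> - b hB * \<epsilon> powr real_of_int hB\<bar> \<le> \<bar>B \<epsilon> - (\<Sum>l=hB..kB. b l * \<epsilon> powr real_of_int l)\<bar> + \<bar>\<Sum>l\<in>{hB<..kB}. b l * \<epsilon> powr real_of_int l\<bar>"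
      unfolding split by linarith
    also have "\<dots> \<le> S * \<epsilon> powr ?q" using t1 t2 unfolding S by (simp add: distrib_right)
    finally show ?thesis .
  qed
  also have "S * \<epsilon> powr ?q = (S * \<epsilon> powr \<delta>B) * \<epsilon> powr real_of_int hB" using e by (simp add: powr_add mult_ac)
  also have "\<dots> \<le> (\<bar>b hB\<bar> / 2) * \<epsilon> powr real_of_int hB"
  proof (rule mult_right_mono)
    have "S * \<epsilon> powr \<delta>B \<le> S * (\<bar>b hB\<bar> / (2 * S))" using dle Sp by (intro mult_left_mono) auto
    then show "S * \<epsilon> powr \<delta>B \<le> \<bar>b hB\<bar> / 2" using Sp by simp
  qed simp
  finally have *: "\<bar>B \<epsilon> - b hB * \<epsilon> powr real_of_int hB\<bar> \<le> \<bar>b hB\<bar> / 2 * \<epsilon> powr real_of_int hB" .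
  have "\<bar>b hB * \<epsilon> powr real_of_int hB\<bar> = \<bar>b hB\<bar> * \<epsilon> powr real_of_int hB" by (simp add: abs_mult)
  then show "\<bar>b hB\<bar> / 2 * \<epsilon> powr real_of_int hB \<le> \<bar>B \<epsilon>\<bar>" using * by linarith
qed

lemma exp_mono_e0: "is_expansion e A h k a d G eA \<Longrightarrow> eA \<le> e' \<Longrightarrow> is_expansion e' A h k a d G eA"
  unfolding is_expansion_def by auto

lemma div_bnd:
  fixes x beta Bv N X q h :: real
  assumes "0 < x" "0 < beta" "beta * x powr h \<le> \<bar>Bv\<bar>" "\<bar>N\<bar> \<le> X * x powr q"
  shows "\<bar>N / Bv\<bar> \<le> inverse beta * X * x powr (q - h)"
proof -
  have p: "0 < beta * x powr h" using assms by simp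
  have "\<bar>N / Bv\<bar> = \<bar>N\<bar> / \<bar>Bv\<bar>" by simp
  also have "\<dots> \<le> (X * x powr q) / (beta * x powr h)"
    by (rule frac_le) (use assms p in auto)
  also have "\<dots> = inverse beta * X * x powr (q - h)" using assms by (simp add: powr_diff field_simps)
  finally show ?thesis .
qed

lemma inv_exp:
  assumes B: "is_expansion e0 B hB kB b \<delta>B GB \<epsilon>B" and bh: "b hB \<noteq> 0"
    and hC: "hC = - hB" and kC: "kC = kB - 2 * hB"
    and cc: "cc = (\<lambda>l. invc b hB (nat (l - hC)))" and dC: "\<delta>C = \<delta>B"
    and et: "et = (\<bar>b hB\<bar> / (2 * ((\<Sum>i\<in>{hB<..kB}. \<bar>b i\<bar> * \<epsilon>B powr (real_of_int (i - hB) - \<delta>B))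
                               + GB * \<epsilon>B powr real_of_int (kB - hB)))) powr (1 / \<delta>B)"
    and eC: "\<epsilon>C = min \<epsilon>B et"
    and GC: "GC = inverse (\<bar>b hB\<bar> / 2) *
               ((\<Sum>(i,j)\<in>{(i,j). i \<in> {hB..kB} \<and> j \<in> {hC..kC} \<and> kB - hB < i + j}.
                   \<bar>b i\<bar> * \<bar>cc j\<bar> * \<epsilon>C powr (real_of_int (i + j - kB + hB) - \<delta>B))
                + GB * (\<Sum>j=hC..kC. \<bar>cc j\<bar> * \<epsilon>C powr real_of_int (j + hB)))"
  shows "is_expansion \<epsilon>C (\<lambda>\<epsilon>. 1 / B \<epsilon>) hC kC cc \<delta>C GC \<epsilon>C" "cc hC \<noteq> 0"
    "\<forall>\<epsilon>. 0 < \<epsilon> \<and> \<epsilon> \<le> \<epsilon>C \<longrightarrow> B \<epsilon> \<noteq> 0" "\<epsilon>C \<le> e0"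
    "\<And>\<epsilon>. 0 < \<epsilon> \<Longrightarrow> \<epsilon> \<le> \<epsilon>C \<Longrightarrow> \<bar>b hB\<bar> / 2 * \<epsilon> powr real_of_int hB \<le> \<bar>B \<epsilon>\<bar>"
proof -
  note b = expD[OF B]
  note lw = lowB[OF B bh refl et]
  show low: "\<And>\<epsilon>. 0 < \<epsilon> \<Longrightarrow> \<epsilon> \<le> \<epsilon>C \<Longrightarrow> \<bar>b hB\<bar> / 2 * \<epsilon> powr real_of_int hB \<le> \<bar>B \<epsilon>\<bar>"
    using lw(3) eC by auto
  show nz: "\<forall>\<epsilon>. 0 < \<epsilon> \<and> \<epsilon> \<le> \<epsilon>C \<longrightarrow> B \<epsilon> \<noteq> 0"
  proof (intro allI impI)
    fix \<epsilon> :: real assume "0 < \<epsilon> \<and> \<epsilon> \<le> \<epsilon>C"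
    then have "0 < \<bar>b hB\<bar> / 2 * \<epsilon> powr real_of_int hB" "\<bar>b hB\<bar> / 2 * \<epsilon> powr real_of_int hB \<le> \<bar>B \<epsilon>\<bar>"
      using low bh by auto
    then show "B \<epsilon> \<noteq> 0" by auto
  qed
  show "\<epsilon>C \<le> e0" using eC b by auto
  have c0: "cc hC = inverse (b hB)" unfolding cc by (simp add: invc.simps[of b hB 0])
  then show cc0: "cc hC \<noteq> 0" using bh by simp
  have eCp: "0 < \<epsilon>C" using eC lw(2) b by auto
  let ?P2 = "{(i,j). i \<in> {hB..kB} \<and> j \<in> {hC..kC} \<and> kB - hB < i + j}"
  have finP2: "finite ?P2" by (rule finite_subset[of _ "{hB..kB} \<times> {hC..kC}"]) auto
  have s1: "0 \<le> (\<Sum>(i,j)\<in>?P2. \<bar>b i\<bar> * \<bar>cc j\<bar> * \<epsilon>C powr (real_of_int (i + j - kB + hB) - \<delta>B))"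
    by (rule sum_nonneg) auto
  have s2: "0 < (\<Sum>j=hC..kC. \<bar>cc j\<bar> * \<epsilon>C powr real_of_int (j + hB))"
  proof -
    have "\<bar>cc hC\<bar> * \<epsilon>C powr real_of_int (hC + hB) \<le> (\<Sum>j=hC..kC. \<bar>cc j\<bar> * \<epsilon>C powr real_of_int (j + hB))"
      by (rule member_le_sum) (use hC kC b in auto)
    moreover have "0 < \<bar>cc hC\<bar> * \<epsilon>C powr real_of_int (hC + hB)" using cc0 eCp by simp
    ultimately show ?thesis by linarith
  qed
  have GCp: "0 < GC" unfolding GC using s1 s2 b(4) bh
    by (intro mult_pos_pos add_nonneg_pos) auto
  have hk: "hC \<le> kC" using hC kC b(1) by auto
  have bnd: "\<bar>1 / B \<epsilon> - (\<Sum>l=hC..kC. cc l * \<epsilon> powr real_of_int l)\<bar>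
       \<le> GC * \<epsilon> powr (real_of_int kC + \<delta>C)" if e: "0 < \<epsilon>" "\<epsilon> \<le> \<epsilon>C" for \<epsilon>
  proof -
    let ?q = "real_of_int (kB - hB) + \<delta>B"
    define PB where "PB = (\<Sum>l=hB..kB. b l * \<epsilon> powr real_of_int l)"
    define PC where "PC = (\<Sum>l=hC..kC. cc l * \<epsilon> powr real_of_int l)"
    define oB where "oB = B \<epsilon> - PB"
    define S2 where "S2 = (\<Sum>(i,j)\<in>?P2. b i * cc j * \<epsilon> powr of_int (i+j))"
    have Bnz: "B \<epsilon> \<noteq> 0" using nz e by auto
    have split: "PB * PC = (\<Sum>r=0..kB - hB. (\<Sum>(i,j)\<in>{(i,j). i\<in>{hB..kB} \<and> j\<in>{hC..kC} \<and> i+j=r}. b i * cc j) * \<epsilon> powr of_int r) + S2"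
      unfolding PB_def PC_def S2_def by (rule prod_split) (use e hC in auto)
    have conv: "(\<Sum>(i,j)\<in>{(i,j). i\<in>{hB..kB} \<and> j\<in>{hC..kC} \<and> i+j=r}. b i * cc j) = (if r = 0 then 1 else 0)"
      if "r \<in> {0..kB - hB}" for r
    proof -
      have "(\<Sum>(i,j)\<in>{(i,j). i\<in>{hB..kB} \<and> j\<in>{hC..kC} \<and> i+j=r}. b i * cc j)
          = (\<Sum>i\<in>{hB..kB}. if r - i \<in> {hC..kC} then b i * cc (r - i) else 0)"
        by (rule pair_fiber) simp
      also have "\<dots> = (if r = 0 then 1 else 0)"
        unfolding cc hC kC by (rule invc_conv[of b hB, OF bh]) (use that in auto)
      finally show ?thesis .
    qed
    have one: "(\<Sum>r=0..kB - hB. (\<Sum>(i,j)\<in>{(i,j). i\<in>{hB..kB} \<and> j\<in>{hC..kC} \<and> i+j=r}. b i * cc j) * \<epsilon> powr of_int r) = 1"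
    proof -
      have "(\<Sum>r=0..kB - hB. (\<Sum>(i,j)\<in>{(i,j). i\<in>{hB..kB} \<and> j\<in>{hC..kC} \<and> i+j=r}. b i * cc j) * \<epsilon> powr of_int r)
          = (\<Sum>r=0..kB - hB. if r = 0 then 1 else 0)"
        by (rule sum.cong) (use conv e in auto)
      also have "\<dots> = 1" using b(1) by simp
      finally show ?thesis .
    qed
    have eq: "1 / B \<epsilon> - PC = (- S2 - oB * PC) / B \<epsilon>"
      using split one Bnz unfolding oB_def by (simp add: field_simps)
    have eB: "\<epsilon> \<le> \<epsilon>B" using e eC by auto
    have oBb: "\<bar>oB\<bar> \<le> GB * \<epsilon> powr (real_of_int kB + \<delta>B)" unfolding oB_def PB_def using b(7)[OF e(1) eB] .
    have t1: "\<bar>S2\<bar> \<le> (\<Sum>(i,j)\<in>?P2. \<bar>b i\<bar> * \<bar>cc j\<bar> * \<epsilon>C powr (real_of_int (i + j - kB + hB) - \<delta>B)) * \<epsilon> powr ?q"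
    proof -
      have "\<bar>S2\<bar> \<le> (\<Sum>p\<in>?P2. (\<bar>b (fst p)\<bar> * \<bar>cc (snd p)\<bar>) * \<epsilon> powr of_int (fst p + snd p))"
        unfolding S2_def by (rule order_trans[OF sum_abs]) (simp add: abs_mult case_prod_beta)
      also have "\<dots> \<le> (\<Sum>p\<in>?P2. (\<bar>b (fst p)\<bar> * \<bar>cc (snd p)\<bar>) * \<epsilon>C powr (real_of_int (fst p + snd p - kB + hB) - \<delta>B)) * \<epsilon> powr ?q"
      proof (rule sum_shift)
        show "\<forall>p\<in>?P2. 0 \<le> real_of_int (fst p + snd p - kB + hB) - \<delta>B \<and>
          real_of_int (fst p + snd p - kB + hB) - \<delta>B = real_of_int (fst p + snd p) - ?q"
        proof
          fix p assume "p \<in> ?P2"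
          then have "1 \<le> fst p + snd p - kB + hB" by auto
          then have "1 \<le> real_of_int (fst p + snd p - kB + hB)" by linarith
          then show "0 \<le> real_of_int (fst p + snd p - kB + hB) - \<delta>B \<and>
            real_of_int (fst p + snd p - kB + hB) - \<delta>B = real_of_int (fst p + snd p) - ?q" using b by auto
        qed
      qed (use e in auto)
      also have "\<dots> = (\<Sum>(i,j)\<in>?P2. \<bar>b i\<bar> * \<bar>cc j\<bar> * \<epsilon>C powr (real_of_int (i + j - kB + hB) - \<delta>B)) * \<epsilon> powr ?q"
        by (simp add: case_prod_beta)
      finally show ?thesis .
    qed
    have t2: "\<bar>oB * PC\<bar> \<le> GB * (\<Sum>j=hC..kC. \<bar>cc j\<bar> * \<epsilon>C powr real_of_int (j + hB)) * \<epsilon> powr ?q"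
      unfolding PC_def
    proof (rule rem_mult[OF oBb e])
      show "\<forall>j\<in>{hC..kC}. 0 \<le> real_of_int (j + hB) \<and>
        real_of_int (j + hB) = real_of_int j + (real_of_int kB + \<delta>B) - ?q"
        using hC by auto
    qed (use b in auto)
    have num: "\<bar>- S2 - oB * PC\<bar> \<le> ((\<Sum>(i,j)\<in>?P2. \<bar>b i\<bar> * \<bar>cc j\<bar> * \<epsilon>C powr (real_of_int (i + j - kB + hB) - \<delta>B))
                + GB * (\<Sum>j=hC..kC. \<bar>cc j\<bar> * \<epsilon>C powr real_of_int (j + hB))) * \<epsilon> powr ?q"
    proof -
      have "\<bar>- S2 - oB * PC\<bar> \<le> \<bar>S2\<bar> + \<bar>oB * PC\<bar>" by linarith
      then show ?thesis using t1 t2 by (simp add: distrib_right)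
    qed
    have "\<bar>(- S2 - oB * PC) / B \<epsilon>\<bar> \<le> inverse (\<bar>b hB\<bar> / 2) * ((\<Sum>(i,j)\<in>?P2. \<bar>b i\<bar> * \<bar>cc j\<bar> * \<epsilon>C powr (real_of_int (i + j - kB + hB) - \<delta>B))
                + GB * (\<Sum>j=hC..kC. \<bar>cc j\<bar> * \<epsilon>C powr real_of_int (j + hB))) * \<epsilon> powr (?q - real_of_int hB)"
      by (rule div_bnd[OF e(1) _ low[OF e] num]) (use bh in simp)
    moreover have "?q - real_of_int hB = real_of_int kC + \<delta>C" using kC dC by simp
    ultimately show ?thesis unfolding eq PC_def[symmetric] GC by simp
  qed
  show "is_expansion \<epsilon>C (\<lambda>\<epsilon>. 1 / B \<epsilon>) hC kC cc \<delta>C GC \<epsilon>C"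
    unfolding is_expansion_def using hk b dC GCp eCp bnd by auto
qed

lemma conv_BD:
  assumes bh: "b hB \<noteq> 0"
    and hC: "hC = - hB" and kC: "kC = kB - 2 * hB"
    and cc: "cc = (\<lambda>l. invc b hB (nat (l - hC)))"
    and hD: "hD = hA - hB" and kD: "kD = min (kA - hB) (kB - 2 * hB + hA)"
    and d: "d = (\<lambda>r. \<Sum>(i,j)\<in>{(i,j). i \<in> {hA..kA} \<and> j \<in> {hC..kC} \<and> i + j = r}. a i * cc j)"
    and m: "m = min kA (hA + kB - hB)"
    and r: "r \<in> {hA..m}"
  shows "(\<Sum>(i,j)\<in>{(i,j). i\<in>{hB..kB} \<and> j\<in>{hD..kD} \<and> i+j=r}. b i * d j) = a r"
proof -
  have "(\<Sum>(i,j)\<in>{(i,j). i\<in>{hB..kB} \<and> j\<in>{hD..kD} \<and> i+j=r}. b i * d j)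
      = (\<Sum>i\<in>{hB..kB}. if r - i \<in> {hD..kD} then b i * d (r - i) else 0)"
    by (rule pair_fiber) simp
  also have "\<dots> = (\<Sum>i\<in>{hB..kB}. \<Sum>i'\<in>{hA..kA}. if r - i' - i \<in> {hC..kC} then a i' * (b i * cc (r - i' - i)) else 0)"
  proof (rule sum.cong[OF refl])
    fix i assume i: "i \<in> {hB..kB}"
    have dd: "d (r - i) = (\<Sum>i'\<in>{hA..kA}. if r - i - i' \<in> {hC..kC} then a i' * cc (r - i - i') else 0)"
      unfolding d by (rule pair_fiber) simp
    show "(if r - i \<in> {hD..kD} then b i * d (r - i) else 0) =
          (\<Sum>i'\<in>{hA..kA}. if r - i' - i \<in> {hC..kC} then a i' * (b i * cc (r - i' - i)) else 0)"
    proof (cases "r - i \<in> {hD..kD}")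
      case True
      then show ?thesis unfolding dd sum_distrib_left
        by (auto intro!: sum.cong simp: algebra_simps)
    next
      case False
      have "(if r - i' - i \<in> {hC..kC} then a i' * (b i * cc (r - i' - i)) else 0) = 0" if "i' \<in> {hA..kA}" for i'
        using False that i r hC hD kD m by auto
      then have "(\<Sum>i'\<in>{hA..kA}. if r - i' - i \<in> {hC..kC} then a i' * (b i * cc (r - i' - i)) else 0) = 0"
        by (intro sum.neutral) blast
      then show ?thesis using False by (simp only: if_False)
    qed
  qed
  also have "\<dots> = (\<Sum>i'\<in>{hA..kA}. a i' * (\<Sum>i\<in>{hB..kB}. if r - i' - i \<in> {hC..kC} then b i * cc (r - i' - i) else 0))"
    by (subst sum.swap) (auto simp: sum_distrib_left intro!: sum.cong)
  also have "\<dots> = (\<Sum>i'\<in>{hA..kA}. a i' * (if r - i' = 0 then 1 else 0))"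
  proof (rule sum.cong[OF refl])
    fix i' assume i': "i' \<in> {hA..kA}"
    have "(\<Sum>i\<in>{hB..kB}. if r - i' - i \<in> {hC..kC} then b i * cc (r - i' - i) else 0) = (if r - i' = 0 then 1 else 0)"
      unfolding cc hC kC by (rule invc_conv[of b hB, OF bh]) (use i' r m in auto)
    then show "a i' * (\<Sum>i\<in>{hB..kB}. if r - i' - i \<in> {hC..kC} then b i * cc (r - i' - i) else 0) = a i' * (if r - i' = 0 then 1 else 0)"
      by simp
  qed
  also have "\<dots> = (\<Sum>i'\<in>{hA..kA}. if r = i' then a i' else 0)" by (rule sum.cong) auto
  also have "\<dots> = a r" using r m by simp
  finally show ?thesis .
qed

lemma div2_exp:
  assumes A: "is_expansion e0 A hA kA a \<delta>A GA \<epsilon>A"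
    and B: "is_expansion e0 B hB kB b \<delta>B GB \<epsilon>B" and bh: "b hB \<noteq> 0"
    and hC: "hC = - hB" and kC: "kC = kB - 2 * hB"
    and cc: "cc = (\<lambda>l. invc b hB (nat (l - hC)))"
    and et: "et = (\<bar>b hB\<bar> / (2 * ((\<Sum>i\<in>{hB<..kB}. \<bar>b i\<bar> * \<epsilon>B powr (real_of_int (i - hB) - \<delta>B))
                               + GB * \<epsilon>B powr real_of_int (kB - hB)))) powr (1 / \<delta>B)"
    and hD: "hD = hA - hB" and kD: "kD = min (kA - hB) (kB - 2 * hB + hA)"
    and d: "d = (\<lambda>r. \<Sum>(i,j)\<in>{(i,j). i \<in> {hA..kA} \<and> j \<in> {hC..kC} \<and> i + j = r}. a i * cc j)"
    and dD: "\<delta>D = (if kA - hB < kB - 2 * hB + hA then \<delta>A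
                else if kA - hB = kB - 2 * hB + hA then min \<delta>A \<delta>B else \<delta>B)"
    and eD: "\<epsilon>D2 = min \<epsilon>A (min \<epsilon>B et)"
    and m: "m = min kA (hA + kB - hB)"
    and GD: "GD2 = inverse (\<bar>b hB\<bar> / 2) *
               ((\<Sum>(i,j)\<in>{(i,j). i \<in> {hB..kB} \<and> j \<in> {hD..kD} \<and> m < i + j}.
                   \<bar>b i\<bar> * \<bar>d j\<bar> * \<epsilon>D2 powr (real_of_int (i + j - kD - hB) - \<delta>D))
                + (\<Sum>i\<in>{m<..kA}. \<bar>a i\<bar> * \<epsilon>D2 powr (real_of_int (i - hB - kD) - \<delta>D))
                + GA * \<epsilon>D2 powr (real_of_int (kA - hB - kD) + \<delta>A - \<delta>D)
                + GB * (\<Sum>j=hD..kD. \<bar>d j\<bar> * \<epsilon>D2 powr (real_of_int (j + kB - hB - kD) + \<delta>B - \<delta>D)))"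
  shows "\<exists>\<epsilon>0'. \<epsilon>D2 \<le> \<epsilon>0' \<and> \<epsilon>0' \<le> e0 \<and> (\<forall>\<epsilon>. 0 < \<epsilon> \<and> \<epsilon> \<le> \<epsilon>0' \<longrightarrow> B \<epsilon> \<noteq> 0) \<and>
            is_expansion \<epsilon>0' (\<lambda>\<epsilon>. A \<epsilon> / B \<epsilon>) hD kD d \<delta>D GD2 \<epsilon>D2"
proof -
  note a = expD[OF A] and b = expD[OF B]
  note lw = lowB[OF B bh refl et]
  have low: "\<And>\<epsilon>. 0 < \<epsilon> \<Longrightarrow> \<epsilon> \<le> \<epsilon>D2 \<Longrightarrow> \<bar>b hB\<bar> / 2 * \<epsilon> powr real_of_int hB \<le> \<bar>B \<epsilon>\<bar>"
    using lw(3) eD by auto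
  have nz: "\<forall>\<epsilon>. 0 < \<epsilon> \<and> \<epsilon> \<le> \<epsilon>D2 \<longrightarrow> B \<epsilon> \<noteq> 0"
  proof (intro allI impI)
    fix \<epsilon> :: real assume "0 < \<epsilon> \<and> \<epsilon> \<le> \<epsilon>D2"
    then have "0 < \<bar>b hB\<bar> / 2 * \<epsilon> powr real_of_int hB" "\<bar>b hB\<bar> / 2 * \<epsilon> powr real_of_int hB \<le> \<bar>B \<epsilon>\<bar>"
      using low bh by auto
    then show "B \<epsilon> \<noteq> 0" by auto
  qed
  have eDp: "0 < \<epsilon>D2" "\<epsilon>D2 \<le> e0" using eD lw(2) a b by auto
  have dDp: "0 < \<delta>D" "\<delta>D \<le> 1" using a b dD by auto
  have dDs: "\<delta>D \<le> \<delta>A \<or> kD < kA - hB" "\<delta>D \<le> \<delta>B \<or> kD < kB - 2 * hB + hA"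
    using dD kD by (auto simp: min_def)
  have mk: "m = kD + hB" using m kD by (auto simp: min_def)
  have hk: "hD \<le> kD" using hD kD a(1) b(1) by auto
  let ?P2 = "{(i,j). i \<in> {hB..kB} \<and> j \<in> {hD..kD} \<and> m < i + j}"
  have finP2: "finite ?P2" by (rule finite_subset[of _ "{hB..kB} \<times> {hD..kD}"]) auto
  have s1: "0 \<le> (\<Sum>(i,j)\<in>?P2. \<bar>b i\<bar> * \<bar>d j\<bar> * \<epsilon>D2 powr (real_of_int (i + j - kD - hB) - \<delta>D))"
    by (rule sum_nonneg) auto
  have s2: "0 \<le> (\<Sum>i\<in>{m<..kA}. \<bar>a i\<bar> * \<epsilon>D2 powr (real_of_int (i - hB - kD) - \<delta>D))"
    by (rule sum_nonneg) auto
  have s4: "0 \<le> GB * (\<Sum>j=hD..kD. \<bar>d j\<bar> * \<epsilon>D2 powr (real_of_int (j + kB - hB - kD) + \<delta>B - \<delta>D))"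
    using b by (intro mult_nonneg_nonneg sum_nonneg) auto
  have GDp: "0 < GD2" unfolding GD using s1 s2 s4 a(4) bh eDp
    by (intro mult_pos_pos add_nonneg_nonneg add_nonneg_pos add_pos_nonneg) auto
  have bnd: "\<bar>A \<epsilon> / B \<epsilon> - (\<Sum>l=hD..kD. d l * \<epsilon> powr real_of_int l)\<bar>
       \<le> GD2 * \<epsilon> powr (real_of_int kD + \<delta>D)" if e: "0 < \<epsilon>" "\<epsilon> \<le> \<epsilon>D2" for \<epsilon>
  proof -
    let ?q = "real_of_int kD + real_of_int hB + \<delta>D"
    define PA where "PA = (\<Sum>l=hA..kA. a l * \<epsilon> powr real_of_int l)"
    define PB where "PB = (\<Sum>l=hB..kB. b l * \<epsilon> powr real_of_int l)"
    define PD where "PD = (\<Sum>l=hD..kD. d l * \<epsilon> powr real_of_int l)"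
    define oA where "oA = A \<epsilon> - PA"
    define oB where "oB = B \<epsilon> - PB"
    define T where "T = (\<Sum>l\<in>{m<..kA}. a l * \<epsilon> powr real_of_int l)"
    define S2 where "S2 = (\<Sum>(i,j)\<in>?P2. b i * d j * \<epsilon> powr of_int (i+j))"
    have Bnz: "B \<epsilon> \<noteq> 0" using nz e by auto
    have split: "PB * PD = (\<Sum>r=hA..m. (\<Sum>(i,j)\<in>{(i,j). i\<in>{hB..kB} \<and> j\<in>{hD..kD} \<and> i+j=r}. b i * d j) * \<epsilon> powr of_int r) + S2"
      unfolding PB_def PD_def S2_def by (rule prod_split) (use e hD in auto)
    have low1: "(\<Sum>r=hA..m. (\<Sum>(i,j)\<in>{(i,j). i\<in>{hB..kB} \<and> j\<in>{hD..kD} \<and> i+j=r}. b i * d j) * \<epsilon> powr of_int r)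
       = (\<Sum>r=hA..m. a r * \<epsilon> powr of_int r)"
      by (rule sum.cong[OF refl], subst conv_BD[OF bh hC kC cc hD kD d m]) auto
    have PAs: "PA = (\<Sum>r=hA..m. a r * \<epsilon> powr of_int r) + T"
    proof -
      have "{hA..kA} = {hA..m} \<union> {m<..kA}" using m a(1) b(1) by auto
      then show ?thesis unfolding PA_def T_def by (simp only:) (rule sum.union_disjoint, auto)
    qed
    have eq: "A \<epsilon> / B \<epsilon> - PD = (T - S2 + oA - oB * PD) / B \<epsilon>"
      using split low1 PAs Bnz unfolding oA_def oB_def by (simp add: field_simps)
    have eA: "\<epsilon> \<le> \<epsilon>A" "\<epsilon> \<le> \<epsilon>B" using e eD by auto
    have oAb: "\<bar>oA\<bar> \<le> GA * \<epsilon> powr (real_of_int kA + \<delta>A)" unfolding oA_def PA_def using a(7)[OF e(1) eA(1)] .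
    have oBb: "\<bar>oB\<bar> \<le> GB * \<epsilon> powr (real_of_int kB + \<delta>B)" unfolding oB_def PB_def using b(7)[OF e(1) eA(2)] .
    have t1: "\<bar>S2\<bar> \<le> (\<Sum>(i,j)\<in>?P2. \<bar>b i\<bar> * \<bar>d j\<bar> * \<epsilon>D2 powr (real_of_int (i + j - kD - hB) - \<delta>D)) * \<epsilon> powr ?q"
    proof -
      have "\<bar>S2\<bar> \<le> (\<Sum>p\<in>?P2. (\<bar>b (fst p)\<bar> * \<bar>d (snd p)\<bar>) * \<epsilon> powr of_int (fst p + snd p))"
        unfolding S2_def by (rule order_trans[OF sum_abs]) (simp add: abs_mult case_prod_beta)
      also have "\<dots> \<le> (\<Sum>p\<in>?P2. (\<bar>b (fst p)\<bar> * \<bar>d (snd p)\<bar>) * \<epsilon>D2 powr (real_of_int (fst p + snd p - kD - hB) - \<delta>D)) * \<epsilon> powr ?q"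
      proof (rule sum_shift)
        show "\<forall>p\<in>?P2. 0 \<le> real_of_int (fst p + snd p - kD - hB) - \<delta>D \<and>
          real_of_int (fst p + snd p - kD - hB) - \<delta>D = real_of_int (fst p + snd p) - ?q"
        proof
          fix p assume "p \<in> ?P2"
          then have "1 \<le> fst p + snd p - kD - hB" using mk by auto
          then have "1 \<le> real_of_int (fst p + snd p - kD - hB)" by linarith
          then show "0 \<le> real_of_int (fst p + snd p - kD - hB) - \<delta>D \<and>
            real_of_int (fst p + snd p - kD - hB) - \<delta>D = real_of_int (fst p + snd p) - ?q" using dDp by auto
        qed
      qed (use e in auto)
      also have "\<dots> = (\<Sum>(i,j)\<in>?P2. \<bar>b i\<bar> * \<bar>d j\<bar> * \<epsilon>D2 powr (real_of_int (i + j - kD - hB) - \<delta>D)) * \<epsilon> powr ?q"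
        by (simp add: case_prod_beta)
      finally show ?thesis .
    qed
    have t2: "\<bar>T\<bar> \<le> (\<Sum>i\<in>{m<..kA}. \<bar>a i\<bar> * \<epsilon>D2 powr (real_of_int (i - hB - kD) - \<delta>D)) * \<epsilon> powr ?q"
      unfolding T_def
    proof (rule order_trans[OF abs_sum_le sum_shift])
      show "\<forall>i\<in>{m<..kA}. 0 \<le> real_of_int (i - hB - kD) - \<delta>D \<and> real_of_int (i - hB - kD) - \<delta>D = real_of_int i - ?q"
      proof
        fix i assume "i \<in> {m<..kA}"
        then have "1 \<le> real_of_int (i - hB - kD)" using mk by simp
        then show "0 \<le> real_of_int (i - hB - kD) - \<delta>D \<and> real_of_int (i - hB - kD) - \<delta>D = real_of_int i - ?q" using dDp by auto
      qed
    qed (use e in auto)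
    have t3: "\<bar>oA\<bar> \<le> GA * \<epsilon>D2 powr (real_of_int (kA - hB - kD) + \<delta>A - \<delta>D) * \<epsilon> powr ?q"
    proof -
      have "\<epsilon> powr (real_of_int kA + \<delta>A) \<le> \<epsilon>D2 powr (real_of_int (kA - hB - kD) + \<delta>A - \<delta>D) * \<epsilon> powr ?q"
      proof (rule shift)
        show "0 \<le> real_of_int (kA - hB - kD) + \<delta>A - \<delta>D"
          by (rule exnn) (use kD dDs dDp a in auto)
      qed (use e in auto)
      then have "GA * \<epsilon> powr (real_of_int kA + \<delta>A) \<le> GA * (\<epsilon>D2 powr (real_of_int (kA - hB - kD) + \<delta>A - \<delta>D) * \<epsilon> powr ?q)"
        using a(4) by (intro mult_left_mono) auto
      then show ?thesis using oAb by (simp add: mult.assoc)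
    qed
    have t4: "\<bar>oB * PD\<bar> \<le> GB * (\<Sum>j=hD..kD. \<bar>d j\<bar> * \<epsilon>D2 powr (real_of_int (j + kB - hB - kD) + \<delta>B - \<delta>D)) * \<epsilon> powr ?q"
      unfolding PD_def
    proof (rule rem_mult[OF oBb e])
      show "\<forall>j\<in>{hD..kD}. 0 \<le> real_of_int (j + kB - hB - kD) + \<delta>B - \<delta>D \<and>
        real_of_int (j + kB - hB - kD) + \<delta>B - \<delta>D = real_of_int j + (real_of_int kB + \<delta>B) - ?q"
      proof
        fix j assume j: "j \<in> {hD..kD}"
        have "0 \<le> real_of_int (j + kB - hB - kD) + \<delta>B - \<delta>D"
          by (rule exnn) (use j hD kD dDs dDp b in auto)
        then show "0 \<le> real_of_int (j + kB - hB - kD) + \<delta>B - \<delta>D \<and>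
          real_of_int (j + kB - hB - kD) + \<delta>B - \<delta>D = real_of_int j + (real_of_int kB + \<delta>B) - ?q" by simp
      qed
    qed (use b in auto)
    let ?X = "(\<Sum>(i,j)\<in>?P2. \<bar>b i\<bar> * \<bar>d j\<bar> * \<epsilon>D2 powr (real_of_int (i + j - kD - hB) - \<delta>D))
                + (\<Sum>i\<in>{m<..kA}. \<bar>a i\<bar> * \<epsilon>D2 powr (real_of_int (i - hB - kD) - \<delta>D))
                + GA * \<epsilon>D2 powr (real_of_int (kA - hB - kD) + \<delta>A - \<delta>D)
                + GB * (\<Sum>j=hD..kD. \<bar>d j\<bar> * \<epsilon>D2 powr (real_of_int (j + kB - hB - kD) + \<delta>B - \<delta>D))"
    have num: "\<bar>T - S2 + oA - oB * PD\<bar> \<le> ?X * \<epsilon> powr ?q"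
    proof -
      have "\<bar>T - S2 + oA - oB * PD\<bar> \<le> \<bar>T\<bar> + \<bar>S2\<bar> + \<bar>oA\<bar> + \<bar>oB * PD\<bar>" by linarith
      then show ?thesis using t1 t2 t3 t4 by (simp add: distrib_right)
    qed
    have "\<bar>(T - S2 + oA - oB * PD) / B \<epsilon>\<bar> \<le> inverse (\<bar>b hB\<bar> / 2) * ?X * \<epsilon> powr (?q - real_of_int hB)"
      by (rule div_bnd[OF e(1) _ low[OF e] num]) (use bh in simp)
    moreover have "?q - real_of_int hB = real_of_int kD + \<delta>D" by simp
    ultimately show ?thesis unfolding eq PD_def[symmetric] GD by simp
  qed
  have "is_expansion \<epsilon>D2 (\<lambda>\<epsilon>. A \<epsilon> / B \<epsilon>) hD kD d \<delta>D GD2 \<epsilon>D2"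
    unfolding is_expansion_def using hk dDp GDp eDp bnd by auto
  then show ?thesis using eDp nz by blast
qed

lemma div1_exp:
  assumes A: "is_expansion e0 A hA kA a \<delta>A GA \<epsilon>A"
    and B: "is_expansion e0 B hB kB b \<delta>B GB \<epsilon>B" and bh: "b hB \<noteq> 0"
    and hC: "hC = - hB" and kC: "kC = kB - 2 * hB"
    and cc: "cc = (\<lambda>l. invc b hB (nat (l - hC)))" and dC: "\<delta>C = \<delta>B"
    and et: "et = (\<bar>b hB\<bar> / (2 * ((\<Sum>i\<in>{hB<..kB}. \<bar>b i\<bar> * \<epsilon>B powr (real_of_int (i - hB) - \<delta>B))
                               + GB * \<epsilon>B powr real_of_int (kB - hB)))) powr (1 / \<delta>B)"
    and eC: "\<epsilon>C = min \<epsilon>B et"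
    and GC: "GC = inverse (\<bar>b hB\<bar> / 2) *
               ((\<Sum>(i,j)\<in>{(i,j). i \<in> {hB..kB} \<and> j \<in> {hC..kC} \<and> kB - hB < i + j}.
                   \<bar>b i\<bar> * \<bar>cc j\<bar> * \<epsilon>C powr (real_of_int (i + j - kB + hB) - \<delta>B))
                + GB * (\<Sum>j=hC..kC. \<bar>cc j\<bar> * \<epsilon>C powr real_of_int (j + hB)))"
    and hD: "hD = hA - hB" and kD: "kD = min (kA - hB) (kB - 2 * hB + hA)"
    and d: "d = (\<lambda>r. \<Sum>(i,j)\<in>{(i,j). i \<in> {hA..kA} \<and> j \<in> {hC..kC} \<and> i + j = r}. a i * cc j)"
    and dD: "\<delta>D = (if kA - hB < kB - 2 * hB + hA then \<delta>A
                else if kA - hB = kB - 2 * hB + hA then min \<delta>A \<delta>B else \<delta>B)"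
    and eD: "\<epsilon>D1 = min \<epsilon>A \<epsilon>C"
    and GD: "GD1 = (\<Sum>(i,j)\<in>{(i,j). i \<in> {hA..kA} \<and> j \<in> {hC..kC} \<and> kD < i + j}.
                   \<bar>a i\<bar> * \<bar>cc j\<bar> * \<epsilon>D1 powr (real_of_int (i + j - kD) - \<delta>D))
             + GA * (\<Sum>j=hC..kC. \<bar>cc j\<bar> * \<epsilon>D1 powr (real_of_int (j + kA - kD) + \<delta>A - \<delta>D))
             + GC * (\<Sum>i=hA..kA. \<bar>a i\<bar> * \<epsilon>D1 powr (real_of_int (i + kC - kD) + \<delta>C - \<delta>D))
             + GA * GC * \<epsilon>D1 powr (real_of_int (kA + kC - kD) + \<delta>A + \<delta>C - \<delta>D)"
  shows "\<exists>\<epsilon>0'. \<epsilon>D1 \<le> \<epsilon>0' \<and> \<epsilon>0' \<le> e0 \<and> (\<forall>\<epsilon>. 0 < \<epsilon> \<and> \<epsilon> \<le> \<epsilon>0' \<longrightarrow> B \<epsilon> \<noteq> 0) \<and>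
            is_expansion \<epsilon>0' (\<lambda>\<epsilon>. A \<epsilon> / B \<epsilon>) hD kD d \<delta>D GD1 \<epsilon>D1"
proof -
  note I = inv_exp[OF B bh hC kC cc dC et eC GC]
  have C: "is_expansion e0 (\<lambda>\<epsilon>. 1 / B \<epsilon>) hC kC cc \<delta>C GC \<epsilon>C" by (rule exp_mono_e0[OF I(1) I(4)])
  have M: "is_expansion e0 (\<lambda>\<epsilon>. A \<epsilon> * (1 / B \<epsilon>)) hD kD d \<delta>D GD1 \<epsilon>D1"
  proof (rule mult_exp[OF A C])
    show "hD = hA + hC" using hD hC by simp
    show "kD = min (kA + hC) (kC + hA)" using kD kC hC by simp
    show "\<delta>D = (if kA + hC < kC + hA then \<delta>A else if kA + hC = kC + hA then min \<delta>A \<delta>C else \<delta>C)"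
      using dD dC hC kC by simp
  qed (use d eD GD in simp_all)
  have M': "is_expansion e0 (\<lambda>\<epsilon>. A \<epsilon> / B \<epsilon>) hD kD d \<delta>D GD1 \<epsilon>D1" using M by simp
  have "is_expansion \<epsilon>D1 (\<lambda>\<epsilon>. A \<epsilon> / B \<epsilon>) hD kD d \<delta>D GD1 \<epsilon>D1" by (rule exp_mono_e0[OF M']) simp
  moreover have "\<epsilon>D1 \<le> e0" using eD I(4) by auto
  moreover have "\<forall>\<epsilon>. 0 < \<epsilon> \<and> \<epsilon> \<le> \<epsilon>D1 \<longrightarrow> B \<epsilon> \<noteq> 0" using I(3) eD by auto
  ultimately show ?thesis by blast
qed

theorem lemma2:
  fixes \<epsilon>0 :: real
    and A B :: "real \<Rightarrow> real"
    and hA kA hB kB :: int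
    and a b :: "int \<Rightarrow> real"
    and \<delta>A GA \<epsilon>A \<delta>B GB \<epsilon>B c :: real
  assumes "0 < \<epsilon>0" and "\<epsilon>0 \<le> 1"
  shows
   "(is_expansion \<epsilon>0 A hA kA a \<delta>A GA \<epsilon>A \<longrightarrow>
      (\<forall>\<epsilon>. 0 < \<epsilon> \<and> \<epsilon> \<le> \<epsilon>A \<longrightarrow>
         \<bar>c * A \<epsilon> - (\<Sum>l=hA..kA. c * a l * \<epsilon> powr real_of_int l)\<bar>
           \<le> \<bar>c\<bar> * GA * \<epsilon> powr (real_of_int kA + \<delta>A)))
  \<and>
   (is_expansion \<epsilon>0 A hA kA a \<delta>A GA \<epsilon>A \<and> is_expansion \<epsilon>0 B hB kB b \<delta>B GB \<epsilon>B \<longrightarrow>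
     (let hC = min hA hB; kC = min kA kB;
          \<delta>C = (if kA < kB then \<delta>A else if kA = kB then min \<delta>A \<delta>B else \<delta>B);
          \<epsilon>C = min \<epsilon>A \<epsilon>B;
          GC = GA * \<epsilon>C powr (real_of_int kA + \<delta>A - real_of_int kC - \<delta>C)
             + (\<Sum>i\<in>{kC<..kA}. \<bar>a i\<bar> * \<epsilon>C powr (real_of_int (i - kC) - \<delta>C))
             + GB * \<epsilon>C powr (real_of_int kB + \<delta>B - real_of_int kC - \<delta>C)
             + (\<Sum>j\<in>{kC<..kB}. \<bar>b j\<bar> * \<epsilon>C powr (real_of_int (j - kC) - \<delta>C))
      in is_expansion \<epsilon>0 (\<lambda>\<epsilon>. A \<epsilon> + B \<epsilon>) hC kC (\<lambda>r. zext hA kA a r + zext hB kB b r) \<delta>C GC \<epsilon>C))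
  \<and>
   (is_expansion \<epsilon>0 A hA kA a \<delta>A GA \<epsilon>A \<and> is_expansion \<epsilon>0 B hB kB b \<delta>B GB \<epsilon>B \<longrightarrow>
     (let hC = hA + hB; kC = min (kA + hB) (kB + hA);
          cc = (\<lambda>r. \<Sum>(i,j)\<in>{(i,j). i \<in> {hA..kA} \<and> j \<in> {hB..kB} \<and> i + j = r}. a i * b j);
          \<delta>C = (if kA + hB < kB + hA then \<delta>A else if kA + hB = kB + hA then min \<delta>A \<delta>B else \<delta>B);
          \<epsilon>C = min \<epsilon>A \<epsilon>B;
          GC = (\<Sum>(i,j)\<in>{(i,j). i \<in> {hA..kA} \<and> j \<in> {hB..kB} \<and> kC < i + j}.
                   \<bar>a i\<bar> * \<bar>b j\<bar> * \<epsilon>C powr (real_of_int (i + j - kC) - \<delta>C))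
             + GA * (\<Sum>j=hB..kB. \<bar>b j\<bar> * \<epsilon>C powr (real_of_int (j + kA - kC) + \<delta>A - \<delta>C))
             + GB * (\<Sum>i=hA..kA. \<bar>a i\<bar> * \<epsilon>C powr (real_of_int (i + kB - kC) + \<delta>B - \<delta>C))
             + GA * GB * \<epsilon>C powr (real_of_int (kA + kB - kC) + \<delta>A + \<delta>B - \<delta>C)
      in is_expansion \<epsilon>0 (\<lambda>\<epsilon>. A \<epsilon> * B \<epsilon>) hC kC cc \<delta>C GC \<epsilon>C))
  \<and>
   (is_expansion \<epsilon>0 B hB kB b \<delta>B GB \<epsilon>B \<and> b hB \<noteq> 0 \<longrightarrow>
     (let hC = - hB; kC = kB - 2 * hB;
          cc = (\<lambda>l. invc b hB (nat (l - hC)));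
          \<delta>C = \<delta>B;
          et = (\<bar>b hB\<bar> / (2 * ((\<Sum>i\<in>{hB<..kB}. \<bar>b i\<bar> * \<epsilon>B powr (real_of_int (i - hB) - \<delta>B))
                               + GB * \<epsilon>B powr real_of_int (kB - hB)))) powr (1 / \<delta>B);
          \<epsilon>C = min \<epsilon>B et;
          GC = inverse (\<bar>b hB\<bar> / 2) *
               ((\<Sum>(i,j)\<in>{(i,j). i \<in> {hB..kB} \<and> j \<in> {hC..kC} \<and> kB - hB < i + j}.
                   \<bar>b i\<bar> * \<bar>cc j\<bar> * \<epsilon>C powr (real_of_int (i + j - kB + hB) - \<delta>B))
                + GB * (\<Sum>j=hC..kC. \<bar>cc j\<bar> * \<epsilon>C powr real_of_int (j + hB)))
      in \<exists>\<epsilon>0'. \<epsilon>C \<le> \<epsilon>0' \<and> \<epsilon>0' \<le> \<epsilon>0 \<and> (\<forall>\<epsilon>. 0 < \<epsilon> \<and> \<epsilon> \<le> \<epsilon>0' \<longrightarrow> B \<epsilon> \<noteq> 0) \<and>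
            is_expansion \<epsilon>0' (\<lambda>\<epsilon>. 1 / B \<epsilon>) hC kC cc \<delta>C GC \<epsilon>C \<and> cc hC \<noteq> 0))
  \<and>
   (is_expansion \<epsilon>0 A hA kA a \<delta>A GA \<epsilon>A \<and> is_expansion \<epsilon>0 B hB kB b \<delta>B GB \<epsilon>B \<and> b hB \<noteq> 0 \<longrightarrow>
     (let hC = - hB; kC = kB - 2 * hB;
          cc = (\<lambda>l. invc b hB (nat (l - hC)));
          \<delta>C = \<delta>B;
          et = (\<bar>b hB\<bar> / (2 * ((\<Sum>i\<in>{hB<..kB}. \<bar>b i\<bar> * \<epsilon>B powr (real_of_int (i - hB) - \<delta>B))
                               + GB * \<epsilon>B powr real_of_int (kB - hB)))) powr (1 / \<delta>B);
          \<epsilon>C = min \<epsilon>B et;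
          GC = inverse (\<bar>b hB\<bar> / 2) *
               ((\<Sum>(i,j)\<in>{(i,j). i \<in> {hB..kB} \<and> j \<in> {hC..kC} \<and> kB - hB < i + j}.
                   \<bar>b i\<bar> * \<bar>cc j\<bar> * \<epsilon>C powr (real_of_int (i + j - kB + hB) - \<delta>B))
                + GB * (\<Sum>j=hC..kC. \<bar>cc j\<bar> * \<epsilon>C powr real_of_int (j + hB)));
          hD = hA - hB; kD = min (kA - hB) (kB - 2 * hB + hA);
          d = (\<lambda>r. \<Sum>(i,j)\<in>{(i,j). i \<in> {hA..kA} \<and> j \<in> {hC..kC} \<and> i + j = r}. a i * cc j);
          \<delta>D = (if kA - hB < kB - 2 * hB + hA then \<delta>A
                else if kA - hB = kB - 2 * hB + hA then min \<delta>A \<delta>B else \<delta>B);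
          \<epsilon>D1 = min \<epsilon>A \<epsilon>C;
          GD1 = (\<Sum>(i,j)\<in>{(i,j). i \<in> {hA..kA} \<and> j \<in> {hC..kC} \<and> kD < i + j}.
                   \<bar>a i\<bar> * \<bar>cc j\<bar> * \<epsilon>D1 powr (real_of_int (i + j - kD) - \<delta>D))
             + GA * (\<Sum>j=hC..kC. \<bar>cc j\<bar> * \<epsilon>D1 powr (real_of_int (j + kA - kD) + \<delta>A - \<delta>D))
             + GC * (\<Sum>i=hA..kA. \<bar>a i\<bar> * \<epsilon>D1 powr (real_of_int (i + kC - kD) + \<delta>C - \<delta>D))
             + GA * GC * \<epsilon>D1 powr (real_of_int (kA + kC - kD) + \<delta>A + \<delta>C - \<delta>D);
          \<epsilon>D2 = min \<epsilon>A (min \<epsilon>B et);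
          m = min kA (hA + kB - hB);
          GD2 = inverse (\<bar>b hB\<bar> / 2) *
               ((\<Sum>(i,j)\<in>{(i,j). i \<in> {hB..kB} \<and> j \<in> {hD..kD} \<and> m < i + j}.
                   \<bar>b i\<bar> * \<bar>d j\<bar> * \<epsilon>D2 powr (real_of_int (i + j - kD - hB) - \<delta>D))
                + (\<Sum>i\<in>{m<..kA}. \<bar>a i\<bar> * \<epsilon>D2 powr (real_of_int (i - hB - kD) - \<delta>D))
                + GA * \<epsilon>D2 powr (real_of_int (kA - hB - kD) + \<delta>A - \<delta>D)
                + GB * (\<Sum>j=hD..kD. \<bar>d j\<bar> * \<epsilon>D2 powr (real_of_int (j + kB - hB - kD) + \<delta>B - \<delta>D)))
      in (\<exists>\<epsilon>0'. \<epsilon>D1 \<le> \<epsilon>0' \<and> \<epsilon>0' \<le> \<epsilon>0 \<and> (\<forall>\<epsilon>. 0 < \<epsilon> \<and> \<epsilon> \<le> \<epsilon>0' \<longrightarrow> B \<epsilon> \<noteq> 0) \<and>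
            is_expansion \<epsilon>0' (\<lambda>\<epsilon>. A \<epsilon> / B \<epsilon>) hD kD d \<delta>D GD1 \<epsilon>D1)
       \<and> (\<exists>\<epsilon>0'. \<epsilon>D2 \<le> \<epsilon>0' \<and> \<epsilon>0' \<le> \<epsilon>0 \<and> (\<forall>\<epsilon>. 0 < \<epsilon> \<and> \<epsilon> \<le> \<epsilon>0' \<longrightarrow> B \<epsilon> \<noteq> 0) \<and>
            is_expansion \<epsilon>0' (\<lambda>\<epsilon>. A \<epsilon> / B \<epsilon>) hD kD d \<delta>D GD2 \<epsilon>D2)))"
  unfolding Let_def
  apply (intro conjI impI)
  subgoal premises A
  proof (intro allI impI)
    fix \<epsilon> :: real assume e: "0 < \<epsilon> \<and> \<epsilon> \<le> \<epsilon>A"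
    have "c * A \<epsilon> - (\<Sum>l=hA..kA. c * a l * \<epsilon> powr real_of_int l) = c * (A \<epsilon> - (\<Sum>l=hA..kA. a l * \<epsilon> powr real_of_int l))"
      by (simp add: sum_distrib_left mult.assoc right_diff_distrib)
    then have "\<bar>c * A \<epsilon> - (\<Sum>l=hA..kA. c * a l * \<epsilon> powr real_of_int l)\<bar> = \<bar>c\<bar> * \<bar>A \<epsilon> - (\<Sum>l=hA..kA. a l * \<epsilon> powr real_of_int l)\<bar>"
      by (simp add: abs_mult)
    also have "\<dots> \<le> \<bar>c\<bar> * (GA * \<epsilon> powr (real_of_int kA + \<delta>A))"
      using expD(7)[OF A] e by (intro mult_left_mono) auto
    finally show "\<bar>c * A \<epsilon> - (\<Sum>l=hA..kA. c * a l * \<epsilon> powr real_of_int l)\<bar> \<le> \<bar>c\<bar> * GA * \<epsilon> powr (real_of_int kA + \<delta>A)"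
      by (simp add: mult.assoc)
  qed
  subgoal by (rule add_exp[OF _ _ refl refl refl refl refl]) auto
  subgoal by (rule mult_exp[OF _ _ refl refl refl refl refl refl]) auto
  subgoal premises p
  proof -
    note I = inv_exp[OF conjunct1[OF p] conjunct2[OF p] refl refl refl refl refl refl refl]
    show ?thesis
      apply (rule exI, intro conjI, rule order_refl)
      using I(1-4) by auto
  qed
  subgoal by (rule div1_exp[OF _ _ _ refl refl refl refl refl refl refl refl refl refl refl refl refl]) auto
  subgoal by (rule div2_exp[OF _ _ _ refl refl refl refl refl refl refl refl refl refl refl]) auto
  done

end
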